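(* Let $W$ be a right-angled Coxeter group with simple generators $S$, and let $x_1,x_2,y_1,y_2\in W$ form a butterfly. Then there exist $m\ge1$, $u,v\in W$, and non-commuting $s,s'\in S$ such that $x_1=u\cdot A^{(m)}(s,s')\cdot v$, $x_2=u\cdot A^{(m)}(s',s)\cdot v$, and $\{y_1,y_2\}=\{u\cdot A^{(m+1)}(s,s')\cdot v,\ u\cdot A^{(m+1)}(s',s)\cdot v\}$, where each of these four products is length-additive.
   Context: $W$ is right-angled: every two distinct simple generators either commute or generate an infinite dihedral group (no relation). $\ell$ is length, $\le$ Bruhat order, $\lessdot$ its covers. Elements $x_1,x_2,y_1,y_2$ with $x_1\ne x_2$, $y_1\ne y_2$ form a butterfly if $x_a\lessdot y_b$ for all $a,b\in\{1,2\}$. For non-commuting $s,s'\in S$, $A^{(m)}(s,s')=ss'ss'\cdots$ is the alternating product of $m$ factors beginning with $s$. A product $u\cdot a\cdot v$ is length-additive if $\ell(uav)=\ell(u)+\ell(a)+\ell(v)$. *)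

theory Defs
  imports Main "HOL-Library.Sublist"
begin

text \<open>A right-angled Coxeter system is given by a set S of generators and a
commutation relation C on S (symmetric, irreflexive): distinct s, t in S commute
iff C s t, otherwise they generate an infinite dihedral group.  W is the group
presented by generators S and relations s s = 1 (s in S) and s t = t s (C s t).
Elements of W are represented by words over S (lists), modulo the congruence
generated by these relations; group multiplication is concatenation.\<close>

definition right_angled :: "'a set \<Rightarrow> ('a \<Rightarrow> 'a \<Rightarrow> bool) \<Rightarrow> bool" where
  "right_angled S C \<longleftrightarrow> (\<forall>s t. C s t \<longrightarrow> s \<in> S \<and> t \<in> S \<and> C t s \<and> s \<noteq> t)"

definition words :: "'a set \<Rightarrow> 'a list set" where
  "words S = {w. set w \<subseteq> S}"

inductive word_step :: "'a set \<Rightarrow> ('a \<Rightarrow> 'a \<Rightarrow> bool) \<Rightarrow> 'a list \<Rightarrow> 'a list \<Rightarrow> bool"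
  for S C where
  cancel: "s \<in> S \<Longrightarrow> word_step S C (xs @ [s, s] @ ys) (xs @ ys)"
| swap: "C s t \<Longrightarrow> word_step S C (xs @ [s, t] @ ys) (xs @ [t, s] @ ys)"

definition eqW :: "'a set \<Rightarrow> ('a \<Rightarrow> 'a \<Rightarrow> bool) \<Rightarrow> 'a list \<Rightarrow> 'a list \<Rightarrow> bool" where
  "eqW S C = equivclp (word_step S C)"

definition len :: "'a set \<Rightarrow> ('a \<Rightarrow> 'a \<Rightarrow> bool) \<Rightarrow> 'a list \<Rightarrow> nat" where
  "len S C w = (LEAST n. \<exists>w'. eqW S C w' w \<and> length w' = n)"

definition bruhat_le :: "'a set \<Rightarrow> ('a \<Rightarrow> 'a \<Rightarrow> bool) \<Rightarrow> 'a list \<Rightarrow> 'a list \<Rightarrow> bool" where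
  "bruhat_le S C u w \<longleftrightarrow> (\<exists>w' u'. eqW S C w' w \<and> length w' = len S C w \<and>
      subseq u' w' \<and> eqW S C u' u)"

definition bruhat_lt :: "'a set \<Rightarrow> ('a \<Rightarrow> 'a \<Rightarrow> bool) \<Rightarrow> 'a list \<Rightarrow> 'a list \<Rightarrow> bool" where
  "bruhat_lt S C u w \<longleftrightarrow> bruhat_le S C u w \<and> \<not> eqW S C u w"

definition bruhat_cover :: "'a set \<Rightarrow> ('a \<Rightarrow> 'a \<Rightarrow> bool) \<Rightarrow> 'a list \<Rightarrow> 'a list \<Rightarrow> bool" where
  "bruhat_cover S C u w \<longleftrightarrow> bruhat_lt S C u w \<and>
      \<not> (\<exists>z \<in> words S. bruhat_lt S C u z \<and> bruhat_lt S C z w)"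

definition butterfly :: "'a set \<Rightarrow> ('a \<Rightarrow> 'a \<Rightarrow> bool) \<Rightarrow> 'a list \<Rightarrow> 'a list \<Rightarrow> 'a list \<Rightarrow> 'a list \<Rightarrow> bool" where
  "butterfly S C x1 x2 y1 y2 \<longleftrightarrow> \<not> eqW S C x1 x2 \<and> \<not> eqW S C y1 y2 \<and>
     bruhat_cover S C x1 y1 \<and> bruhat_cover S C x1 y2 \<and>
     bruhat_cover S C x2 y1 \<and> bruhat_cover S C x2 y2"

definition alt :: "nat \<Rightarrow> 'a \<Rightarrow> 'a \<Rightarrow> 'a list" where
  "alt m s s' = map (\<lambda>i. if even i then s else s') [0..<m]"

definition len_additive :: "'a set \<Rightarrow> ('a \<Rightarrow> 'a \<Rightarrow> bool) \<Rightarrow> 'a list \<Rightarrow> 'a list \<Rightarrow> 'a list \<Rightarrow> bool" where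
  "len_additive S C u a v \<longleftrightarrow> len S C (u @ a @ v) = len S C u + len S C a + len S C v"

end

theory Submission
  imports Defs "HOL-Library.Multiset"
begin

fun dl :: "('a \<Rightarrow> 'a \<Rightarrow> bool) \<Rightarrow> 'a \<Rightarrow> 'a list \<Rightarrow> 'a list option" where
  "dl C s [] = None"
| "dl C s (x # xs) = (if x = s then Some xs else if C x s then map_option (Cons x) (dl C s xs) else None)"

definition ff :: "('a \<Rightarrow> 'a \<Rightarrow> bool) \<Rightarrow> 'a \<Rightarrow> 'a list \<Rightarrow> 'a list" where
  "ff C s w = (case dl C s w of None \<Rightarrow> s # w | Some r \<Rightarrow> r)"

fun Phi :: "('a \<Rightarrow> 'a \<Rightarrow> bool) \<Rightarrow> 'a list \<Rightarrow> 'a list" where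
  "Phi C [] = []"
| "Phi C (a # w) = ff C a (Phi C w)"

fun rd :: "('a \<Rightarrow> 'a \<Rightarrow> bool) \<Rightarrow> 'a list \<Rightarrow> bool" where
  "rd C [] = True"
| "rd C (a # w) = (rd C w \<and> dl C a w = None)"

definition swst :: "('a \<Rightarrow> 'a \<Rightarrow> bool) \<Rightarrow> 'a list \<Rightarrow> 'a list \<Rightarrow> bool" where
  "swst C u w \<longleftrightarrow> (\<exists>xs ys s t. C s t \<and> u = xs @ [s, t] @ ys \<and> w = xs @ [t, s] @ ys)"

abbreviation sw :: "('a \<Rightarrow> 'a \<Rightarrow> bool) \<Rightarrow> 'a list \<Rightarrow> 'a list \<Rightarrow> bool" where
  "sw C \<equiv> (swst C)\<^sup>*\<^sup>*"

lemma eqW_refl[simp]: "eqW S C w w" by (simp add: eqW_def)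
lemma eqW_sym: "eqW S C a b \<Longrightarrow> eqW S C b a" unfolding eqW_def by (rule equivclp_sym)
lemma eqW_trans[trans]: "eqW S C a b \<Longrightarrow> eqW S C b c \<Longrightarrow> eqW S C a c"
  unfolding eqW_def by (rule equivclp_trans)
lemma eqW_step: "word_step S C a b \<Longrightarrow> eqW S C a b"
  unfolding eqW_def by (rule r_into_equivclp)

lemma word_step_ctx: "word_step S C a b \<Longrightarrow> word_step S C (x @ a @ y) (x @ b @ y)"
proof (induction rule: word_step.induct)
  case (cancel s xs ys)
  then show ?case using word_step.cancel[where xs="x @ xs" and ys="ys @ y"] by simp
next
  case (swap s t xs ys)
  then show ?case using word_step.swap[where xs="x @ xs" and ys="ys @ y"] by simp
qed

lemma eqW_ctx: "eqW S C a b \<Longrightarrow> eqW S C (x @ a @ y) (x @ b @ y)"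
  unfolding eqW_def
proof (induction rule: equivclp_induct)
  case base then show ?case by simp
next
  case (step b c)
  then show ?case
    by (meson equivclp_into_equivclp word_step_ctx)
qed

lemma eqW_Cons: "eqW S C a b \<Longrightarrow> eqW S C (x # a) (x # b)"
  using eqW_ctx[of S C a b "[x]" "[]"] by simp
lemma eqW_app1: "eqW S C a b \<Longrightarrow> eqW S C (x @ a) (x @ b)"
  using eqW_ctx[of S C a b x "[]"] by simp
lemma eqW_app2: "eqW S C a b \<Longrightarrow> eqW S C (a @ y) (b @ y)"
  using eqW_ctx[of S C a b "[]" y] by simp
lemma eqW_app: "eqW S C a b \<Longrightarrow> eqW S C c d \<Longrightarrow> eqW S C (a @ c) (b @ d)"
  by (meson eqW_app1 eqW_app2 eqW_trans)

lemma eqW_cancel: "s \<in> S \<Longrightarrow> eqW S C (s # s # w) w"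
  using word_step.cancel[where xs="[]" and ys=w] eqW_step by fastforce

lemma swst_eqW: "swst C a b \<Longrightarrow> eqW S C a b"
  unfolding swst_def using word_step.swap eqW_step by fastforce

lemma sw_eqW: "sw C a b \<Longrightarrow> eqW S C a b"
  by (induction rule: rtranclp_induct) (auto intro: eqW_trans swst_eqW)

lemma swst_ctx: "swst C a b \<Longrightarrow> swst C (x @ a @ y) (x @ b @ y)"
  unfolding swst_def by (metis append.assoc)

lemma sw_ctx: "sw C a b \<Longrightarrow> sw C (x @ a @ y) (x @ b @ y)"
proof (induction rule: rtranclp_induct)
  case base then show ?case by simp
next
  case (step b c) then show ?case by (meson rtranclp.simps swst_ctx)
qed

lemma sw_Cons: "sw C a b \<Longrightarrow> sw C (x # a) (x # b)"
  using sw_ctx[of C a b "[x]" "[]"] by simp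
lemma sw_app1: "sw C a b \<Longrightarrow> sw C (x @ a) (x @ b)"
  using sw_ctx[of C a b x "[]"] by simp
lemma sw_app2: "sw C a b \<Longrightarrow> sw C (a @ y) (b @ y)"
  using sw_ctx[of C a b "[]" y] by simp

lemma swst_length: "swst C a b \<Longrightarrow> length a = length b"
  unfolding swst_def by auto
lemma sw_length: "sw C a b \<Longrightarrow> length a = length b"
  by (induction rule: rtranclp_induct) (auto dest: swst_length)
lemma swst_mset: "swst C a b \<Longrightarrow> mset a = mset b"
  unfolding swst_def by auto
lemma sw_mset: "sw C a b \<Longrightarrow> mset a = mset b"
  by (induction rule: rtranclp_induct) (auto dest: swst_mset)
lemma sw_set: "sw C a b \<Longrightarrow> set a = set b"
  by (metis sw_mset set_mset_mset)

lemma sw_trans[trans]: "sw C a b \<Longrightarrow> sw C b c \<Longrightarrow> sw C a c" by simp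

lemma dl_len: "dl C s w = Some r \<Longrightarrow> length w = Suc (length r)"
  by (induction w arbitrary: r) (auto split: if_splits)

lemma dl_mset: "dl C s w = Some r \<Longrightarrow> mset w = add_mset s (mset r)"
  by (induction w arbitrary: r) (auto split: if_splits)

lemma dl_set: "dl C s w = Some r \<Longrightarrow> set r \<subseteq> set w"
  by (induction w arbitrary: r) (auto split: if_splits)

lemma dl_comm_prefix: "(\<forall>x\<in>set P. C x s \<and> x \<noteq> s) \<Longrightarrow> dl C s (P @ Q) = map_option ((@) P) (dl C s Q)"
  proof (induction P)
  case Nil
  have "(@) [] = (\<lambda>x::'a list. x)" by auto
  then show ?case by (simp add: option.map_ident)
next
  case (Cons a P)
  then show ?case by (auto simp: option.map_comp comp_def)
qed

lemma dl_Some_split: "dl C s w = Some r \<Longrightarrow> \<exists>p q. w = p @ s # q \<and> (\<forall>x\<in>set p. C x s \<and> x \<noteq> s) \<and> r = p @ q"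
proof (induction w arbitrary: r)
  case Nil then show ?case by simp
next
  case (Cons x w)
  show ?case
  proof (cases "x = s")
    case True then show ?thesis using Cons by force
  next
    case False
    with Cons.prems obtain r' where "C x s" "dl C s w = Some r'" "r = x # r'"
      by (auto split: if_splits)
    with Cons.IH[of r'] False show ?thesis by (metis Cons_eq_appendI set_ConsD)
  qed
qed

lemma dl_split_Some: "(\<forall>x\<in>set p. C x s \<and> x \<noteq> s) \<Longrightarrow> dl C s (p @ s # q) = Some (p @ q)"
  by (simp add: dl_comm_prefix)

lemma ff_len: "length (ff C s w) \<le> Suc (length w)"
  unfolding ff_def by (auto split: option.splits dest: dl_len)

lemma Phi_len: "length (Phi C w) \<le> length w"
  by (induction w) (auto intro: le_trans[OF ff_len])

lemma rd_append2: "rd C (A @ B) \<Longrightarrow> rd C B"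
  by (induction A) auto


context
  fixes S :: "'a set" and C :: "'a \<Rightarrow> 'a \<Rightarrow> bool"
  assumes ra: "right_angled S C"
begin

lemma Csym: "C a b \<Longrightarrow> C b a" using ra unfolding right_angled_def by blast
lemma Cirr: "C a b \<Longrightarrow> a \<noteq> b" using ra unfolding right_angled_def by blast
lemma CS: "C a b \<Longrightarrow> a \<in> S \<and> b \<in> S" using ra unfolding right_angled_def by blast
lemma Cnot: "\<not> C a a" using Cirr by blast

lemma swst_sym: "swst C a b \<Longrightarrow> swst C b a"
  unfolding swst_def using Csym by blast

lemma sw_sym: "sw C a b \<Longrightarrow> sw C b a"
proof (induction rule: rtranclp_induct)
  case base then show ?case by simp
next
  case (step b c) then show ?case by (meson converse_rtranclp_into_rtranclp swst_sym)
qed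

lemma dl_Some_iff: "dl C s w = Some r \<longleftrightarrow> (\<exists>p q. w = p @ s # q \<and> (\<forall>x\<in>set p. C x s) \<and> r = p @ q)"
proof
  assume "dl C s w = Some r"
  from dl_Some_split[OF this] show "\<exists>p q. w = p @ s # q \<and> (\<forall>x\<in>set p. C x s) \<and> r = p @ q" by blast
next
  assume "\<exists>p q. w = p @ s # q \<and> (\<forall>x\<in>set p. C x s) \<and> r = p @ q"
  then obtain p q where "w = p @ s # q" "\<forall>x\<in>set p. C x s" "r = p @ q" by blast
  then show "dl C s w = Some r" using dl_split_Some[where p=p and s=s and C=C and q=q] Cirr by blast
qed

lemma dl_None_iff: "dl C s w = None \<longleftrightarrow> \<not>(\<exists>p q. w = p @ s # q \<and> (\<forall>x\<in>set p. C x s))"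
proof -
  have "dl C s w = None \<longleftrightarrow> \<not>(\<exists>r. dl C s w = Some r)" by (cases "dl C s w") auto
  then show ?thesis by (simp add: dl_Some_iff)
qed

lemma dl_comm_prefix': "(\<forall>x\<in>set P. C x s) \<Longrightarrow> dl C s (P @ Q) = map_option ((@) P) (dl C s Q)"
  by (rule dl_comm_prefix) (use Cirr in blast)

lemma sw_comm1: "C a s \<Longrightarrow> sw C (s # a # Q) (a # s # Q)"
proof -
  assume "C a s" then have "C s a" by (rule Csym)
  have "swst C ([] @ [s, a] @ Q) ([] @ [a, s] @ Q)" unfolding swst_def using \<open>C s a\<close> by blast
  then show ?thesis by simp
qed

lemma sw_comm: "(\<forall>x\<in>set P. C x s) \<Longrightarrow> sw C (s # P @ Q) (P @ s # Q)"
proof (induction P)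
  case Nil then show ?case by simp
next
  case (Cons a P)
  then have "sw C (s # a # P @ Q) (a # s # P @ Q)" using sw_comm1 by simp
  also have "sw C \<dots> (a # P @ s # Q)" using Cons by (simp add: sw_Cons)
  finally show ?case by simp
qed

lemma dl_ins_None: "C t x \<Longrightarrow> dl C x (A @ t # B) = None \<Longrightarrow> dl C x (A @ B) = None"
proof (induction A)
  case Nil
  then show ?case using Cirr by (auto split: if_splits)
next
  case (Cons a A)
  then show ?case by (auto split: if_splits)
qed

lemma rd_del: "rd C (P @ s # Q) \<Longrightarrow> (\<forall>x\<in>set P. C x s) \<Longrightarrow> rd C (P @ Q)"
proof (induction P)
  case Nil then show ?case by simp
next
  case (Cons a P)
  then show ?case using dl_ins_None[of s a P Q] Csym by auto
qed

lemma rd_ff: "rd C w \<Longrightarrow> rd C (ff C s w)"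
  unfolding ff_def
  by (auto split: option.splits simp: dl_Some_iff intro: rd_del)

lemma rd_Phi: "rd C (Phi C w)"
  by (induction w) (auto intro: rd_ff)

lemma ff_ff: "rd C w \<Longrightarrow> sw C (ff C s (ff C s w)) w"
proof (cases "dl C s w")
  case None
  then show ?thesis by (simp add: ff_def)
next
  case (Some r)
  assume "rd C w"
  from Some obtain P Q where w: "w = P @ s # Q" and P: "\<forall>x\<in>set P. C x s" and r: "r = P @ Q"
    by (auto simp: dl_Some_iff)
  have "dl C s Q = None"
  proof (rule ccontr)
    assume "dl C s Q \<noteq> None"
    then have "dl C s (s # Q) = None \<Longrightarrow> False" using Cnot by auto
    moreover have "rd C (s # Q)" using \<open>rd C w\<close> w rd_append2 by metis
    ultimately show False using \<open>dl C s Q \<noteq> None\<close> by simp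
  qed
  then have "dl C s (P @ Q) = None" using dl_comm_prefix'[OF P] by simp
  then have "ff C s (ff C s w) = s # P @ Q" using Some r by (simp add: ff_def)
  then show ?thesis using sw_comm[OF P] w by simp
qed

lemma dl_both: "dl C t w = Some r1 \<Longrightarrow> dl C s w = Some r2 \<Longrightarrow> s \<noteq> t \<Longrightarrow> C s t \<Longrightarrow>
   \<exists>r. dl C s r1 = Some r \<and> dl C t r2 = Some r"
proof (induction w arbitrary: r1 r2)
  case Nil then show ?case by simp
next
  case (Cons x w)
  show ?case
  proof (cases "x = t")
    case True
    then show ?thesis using Cons.prems Csym by (auto split: if_splits)
  next
    case False
    note xt = False
    show ?thesis
    proof (cases "x = s")
      case True
      then show ?thesis using Cons.prems Csym xt by (auto split: if_splits)
    next
      case False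
      from Cons.prems xt False obtain r1' r2' where
        "C x t" "C x s" "dl C t w = Some r1'" "dl C s w = Some r2'" "r1 = x # r1'" "r2 = x # r2'"
        by (auto split: if_splits)
      then show ?thesis using Cons.IH[of r1' r2'] Cons.prems xt False by auto
    qed
  qed
qed

lemma ff_comm: "C s t \<Longrightarrow> sw C (ff C s (ff C t w)) (ff C t (ff C s w))"
proof -
  assume st: "C s t"
  then have ts: "C t s" "s \<noteq> t" using Csym Cirr by auto
  show ?thesis
  proof (cases "dl C t w")
    case None
    note Nt = None
    show ?thesis
    proof (cases "dl C s w")
      case None
      have "ff C s (ff C t w) = s # t # w" using None Nt ts st by (simp add: ff_def)
      moreover have "ff C t (ff C s w) = t # s # w" using None Nt ts st by (simp add: ff_def)
      ultimately show ?thesis using sw_comm1[of t s w] ts by simp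
    next
      case (Some r2)
      then obtain P Q where w: "w = P @ s # Q" and P: "\<forall>x\<in>set P. C x s" and r: "r2 = P @ Q"
        by (auto simp: dl_Some_iff)
      have "dl C t (P @ Q) = None" using dl_ins_None[of s t P Q] Nt w st by simp
      then have "ff C t (ff C s w) = t # P @ Q" using Some r by (simp add: ff_def)
      moreover have "ff C s (ff C t w) = t # P @ Q" using Nt Some r ts st by (simp add: ff_def)
      ultimately show ?thesis by simp
    qed
  next
    case (Some r1)
    note St = Some
    show ?thesis
    proof (cases "dl C s w")
      case None
      then obtain P Q where w: "w = P @ t # Q" and P: "\<forall>x\<in>set P. C x t" and r: "r1 = P @ Q"
        using St by (auto simp: dl_Some_iff)
      have "dl C s (P @ Q) = None" using dl_ins_None[of t s P Q] None w ts by simp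
      then have "ff C s (ff C t w) = s # P @ Q" using St r by (simp add: ff_def)
      moreover have "ff C t (ff C s w) = s # P @ Q" using None St r ts st by (simp add: ff_def)
      ultimately show ?thesis by simp
    next
      case (Some r2)
      obtain r where "dl C s r1 = Some r" "dl C t r2 = Some r" using dl_both[OF St Some ts(2) st] by blast
      then show ?thesis using St Some by (simp add: ff_def)
    qed
  qed
qed

end


lemma len_le: "eqW S C w' w \<Longrightarrow> len S C w \<le> length w'"
  unfolding len_def by (rule Least_le) blast

lemma len_ex: "\<exists>w'. eqW S C w' w \<and> length w' = len S C w"
  unfolding len_def by (rule LeastI_ex) (use eqW_refl in blast)

lemma len_le_length: "len S C w \<le> length w"
  using len_le[of S C w w] by simp

lemma len_eqW: "eqW S C a b \<Longrightarrow> len S C a = len S C b"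
proof -
  assume ab: "eqW S C a b"
  obtain a' where a': "eqW S C a' a" "length a' = len S C a" using len_ex by blast
  obtain b' where b': "eqW S C b' b" "length b' = len S C b" using len_ex by blast
  have "len S C b \<le> length a'" using a' ab by (meson eqW_trans len_le)
  moreover have "len S C a \<le> length b'" using b' ab by (meson eqW_sym eqW_trans len_le)
  ultimately show ?thesis using a' b' by simp
qed

lemma Phi_append: "Phi C (xs @ ys) = foldr (ff C) xs (Phi C ys)"
  by (induction xs) auto

lemma set_ff: "set (ff C s w) \<subseteq> insert s (set w)"
  unfolding ff_def by (auto split: option.splits dest: dl_set)

lemma set_Phi: "set (Phi C w) \<subseteq> set w"
  by (induction w) (use set_ff in fastforce)+

context
  fixes S :: "'a set" and C :: "'a \<Rightarrow> 'a \<Rightarrow> bool"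
  assumes ra: "right_angled S C"
begin

lemma dl_swst:
  assumes "C a b"
  shows "(dl C s (xs @ [a,b] @ ys) = None \<longleftrightarrow> dl C s (xs @ [b,a] @ ys) = None) \<and>
    (\<forall>r. dl C s (xs @ [a,b] @ ys) = Some r \<longrightarrow> (\<exists>r'. dl C s (xs @ [b,a] @ ys) = Some r' \<and> sw C r r'))"
proof (induction xs)
  case Nil
  have ab: "a \<noteq> b" "C b a" using assms Cirr[OF ra] Csym[OF ra] by auto
  show ?case
  proof (cases "a = s")
    case True then show ?thesis using ab by auto
  next
    case False
    note as = False
    show ?thesis
    proof (cases "b = s")
      case True then show ?thesis using ab assms as by auto
    next
      case False
      have "sw C (a # b # r) (b # a # r)" for r
      proof -
        have "swst C ([] @ [a, b] @ r) ([] @ [b, a] @ r)" unfolding swst_def using assms by blast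
        then show ?thesis by simp
      qed
      then show ?thesis using as False by (auto simp: option.map_comp comp_def)
    qed
  qed
next
  case (Cons x xs)
  have "swst C (xs @ [a, b] @ ys) (xs @ [b, a] @ ys)" unfolding swst_def using assms by blast
  then have "sw C (xs @ a # b # ys) (xs @ b # a # ys)" by simp
  with Cons show ?case by (auto intro: sw_Cons)
qed

lemma ff_swst: "swst C w w' \<Longrightarrow> sw C (ff C s w) (ff C s w')"
proof -
  assume "swst C w w'"
  then obtain xs ys a b where ab: "C a b" "w = xs @ [a,b] @ ys" "w' = xs @ [b,a] @ ys"
    unfolding swst_def by blast
  note d = dl_swst[OF ab(1), of s xs ys]
  show ?thesis
  proof (cases "dl C s w")
    case None
    then have "dl C s w' = None" using d ab by simp
    then show ?thesis using None ab \<open>swst C w w'\<close> by (simp add: ff_def sw_Cons r_into_rtranclp)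
  next
    case (Some r)
    then obtain r' where "dl C s w' = Some r'" "sw C r r'" using d ab by auto
    then show ?thesis using Some by (simp add: ff_def)
  qed
qed

lemma ff_sw: "sw C w w' \<Longrightarrow> sw C (ff C s w) (ff C s w')"
proof (induction rule: rtranclp_induct)
  case base then show ?case by simp
next
  case (step b c) then show ?case using ff_swst by (meson rtranclp_trans)
qed

lemma foldr_ff_sw: "sw C w w' \<Longrightarrow> sw C (foldr (ff C) xs w) (foldr (ff C) xs w')"
  by (induction xs) (auto intro: ff_sw)

lemma Phi_step: "word_step S C w w' \<Longrightarrow> sw C (Phi C w) (Phi C w')"
proof (induction rule: word_step.induct)
  case (cancel s xs ys)
  have "sw C (ff C s (ff C s (Phi C ys))) (Phi C ys)" using ff_ff[OF ra rd_Phi[OF ra]] .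
  then show ?case by (simp add: Phi_append foldr_ff_sw)
next
  case (swap s t xs ys)
  have "sw C (ff C s (ff C t (Phi C ys))) (ff C t (ff C s (Phi C ys)))" using ff_comm[OF ra swap] .
  then show ?case by (simp add: Phi_append foldr_ff_sw)
qed

lemma Phi_eqW: "eqW S C w w' \<Longrightarrow> sw C (Phi C w) (Phi C w')"
  unfolding eqW_def
proof (induction rule: equivclp_induct)
  case base then show ?case by simp
next
  case (step b c)
  then show ?case using Phi_step sw_sym[OF ra] by (meson rtranclp_trans)
qed

lemma Phi_rd: "rd C w \<Longrightarrow> sw C (Phi C w) w"
proof (induction w)
  case Nil then show ?case by simp
next
  case (Cons a w)
  then have "sw C (ff C a (Phi C w)) (ff C a w)" using ff_sw by simp
  moreover have "ff C a w = a # w" using Cons.prems by (simp add: ff_def)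
  ultimately show ?case by simp
qed

lemma rd_len: "rd C w \<Longrightarrow> len S C w = length w"
proof -
  assume w: "rd C w"
  obtain w' where w': "eqW S C w' w" "length w' = len S C w" using len_ex by blast
  have "sw C (Phi C w') (Phi C w)" using Phi_eqW[OF w'(1)] .
  then have "sw C (Phi C w') w" using Phi_rd[OF w] by simp
  then have "length w = length (Phi C w')" using sw_length by metis
  also have "\<dots> \<le> length w'" by (rule Phi_len)
  finally show ?thesis using w' len_le_length[of S C w] by simp
qed

lemma ff_eqW: "s \<in> S \<Longrightarrow> eqW S C (ff C s w) (s # w)"
proof (cases "dl C s w")
  case None then show ?thesis by (simp add: ff_def)
next
  case (Some r)
  assume s: "s \<in> S"
  from Some obtain P Q where w: "w = P @ s # Q" and P: "\<forall>x\<in>set P. C x s" and r: "r = P @ Q"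
    using dl_Some_iff[OF ra] by blast
  have "eqW S C (s # w) (P @ s # s # Q)" using sw_comm[OF ra P, of "s # Q"] w sw_eqW by simp
  also have "eqW S C (P @ s # s # Q) (P @ Q)" using eqW_cancel[OF s, of C Q] eqW_app1 by blast
  finally show ?thesis using Some r by (simp add: ff_def eqW_sym)
qed

lemma Phi_eqW_self: "set w \<subseteq> S \<Longrightarrow> eqW S C (Phi C w) w"
proof (induction w)
  case Nil then show ?case by simp
next
  case (Cons a w)
  then have "eqW S C (ff C a (Phi C w)) (a # Phi C w)" using ff_eqW by simp
  also have "eqW S C (a # Phi C w) (a # w)" using Cons eqW_Cons by simp
  finally show ?case by simp
qed

lemma len_Phi: "set w \<subseteq> S \<Longrightarrow> len S C w = length (Phi C w)"
  using rd_len[OF rd_Phi[OF ra]] len_eqW Phi_eqW_self by metis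

lemma rd_sw: "rd C a \<Longrightarrow> rd C b \<Longrightarrow> eqW S C a b \<Longrightarrow> sw C a b"
proof -
  assume a: "rd C a" and b: "rd C b" and ab: "eqW S C a b"
  have "sw C a (Phi C a)" using Phi_rd[OF a] sw_sym[OF ra] by blast
  also have "sw C (Phi C a) (Phi C b)" using Phi_eqW[OF ab] .
  also have "sw C (Phi C b) b" using Phi_rd[OF b] .
  finally show ?thesis .
qed

lemma not_rd_shorter: "set w \<subseteq> S \<Longrightarrow> \<not> rd C w \<Longrightarrow> len S C w < length w"
proof (induction w)
  case Nil then show ?case by simp
next
  case (Cons a w)
  show ?case
  proof (cases "rd C w")
    case False
    then have "len S C w < length w" using Cons by simp
    then obtain w' where "eqW S C w' w" "length w' < length w" using len_ex by metis
    then have "eqW S C (a # w') (a # w)" "length (a # w') < length (a # w)" using eqW_Cons by auto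
    then show ?thesis using len_le by fastforce
  next
    case True
    then obtain r where r: "dl C a w = Some r" using Cons.prems by auto
    then have "eqW S C r (a # w)" using ff_eqW[of a w] Cons.prems by (simp add: ff_def)
    moreover have "length r < length (a # w)" using dl_len[OF r] by simp
    ultimately show ?thesis using len_le by fastforce
  qed
qed

lemma len_rd: "set w \<subseteq> S \<Longrightarrow> len S C w = length w \<Longrightarrow> rd C w"
  using not_rd_shorter by fastforce

end


definition desc :: "'a set \<Rightarrow> ('a \<Rightarrow> 'a \<Rightarrow> bool) \<Rightarrow> 'a \<Rightarrow> 'a list \<Rightarrow> bool" where
  "desc S C s w \<longleftrightarrow> len S C (s # w) < len S C w"

definition rm :: "nat \<Rightarrow> 'a list \<Rightarrow> 'a list" where
  "rm p Y = take p Y @ drop (Suc p) Y"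

lemma rm_Cons0[simp]: "rm 0 (y # Y) = Y" by (simp add: rm_def)
lemma rm_ConsS[simp]: "rm (Suc p) (y # Y) = y # rm p Y" by (simp add: rm_def)

lemma word_step_set: "word_step S C a b \<Longrightarrow> (set a \<subseteq> S \<longleftrightarrow> set b \<subseteq> S)"
  by (induction rule: word_step.induct) auto

lemma eqW_set: "eqW S C a b \<Longrightarrow> set a \<subseteq> S \<Longrightarrow> set b \<subseteq> S"
  unfolding eqW_def
proof (induction rule: equivclp_induct)
  case base then show ?case by simp
next
  case (step b c) then show ?case using word_step_set by metis
qed

lemma length_ff: "length (ff C s W) = (if dl C s W = None then Suc (length W) else length W - 1)"
  unfolding ff_def by (auto split: option.splits dest: dl_len)

lemma len_app: "len S C (a @ b) \<le> len S C a + len S C b"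
proof -
  obtain a' where a': "eqW S C a' a" "length a' = len S C a" using len_ex by blast
  obtain b' where b': "eqW S C b' b" "length b' = len S C b" using len_ex by blast
  have "eqW S C (a' @ b') (a @ b)" using a' b' eqW_app by blast
  then show ?thesis using len_le a' b' by fastforce
qed

lemma len_Cons_le: "len S C (s # w) \<le> Suc (len S C w)"
  using len_app[of S C "[s]" w] len_le_length[of S C "[s]"] by simp

lemma subseq_Cons_cases: "subseq U (s # W) \<Longrightarrow> subseq U W \<or> (\<exists>U1. U = s # U1 \<and> subseq U1 W)"
  by (cases U) (auto split: if_splits)

lemma subseq_rm: "subseq U Y \<Longrightarrow> Suc (length U) = length Y \<Longrightarrow> \<exists>p < length Y. U = rm p Y"
proof (induction Y arbitrary: U)
  case Nil then show ?case by simp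
next
  case (Cons y Y)
  from subseq_Cons_cases[OF Cons.prems(1)] show ?case
  proof
    assume "subseq U Y"
    then have "U = Y" using Cons.prems(2) by (simp add: subseq_same_length)
    then show ?thesis by (intro exI[of _ 0]) simp
  next
    assume "\<exists>U1. U = y # U1 \<and> subseq U1 Y"
    then obtain U1 where "U = y # U1" "subseq U1 Y" by blast
    with Cons.IH[of U1] Cons.prems(2) obtain p where "p < length Y" "U1 = rm p Y" by auto
    then show ?thesis using \<open>U = y # U1\<close> by (intro exI[of _ "Suc p"]) simp
  qed
qed

lemma rm_subseq: "subseq (rm p Y) Y"
proof -
  have "drop (Suc p) Y = drop 1 (drop p Y)" by simp
  then have "subseq (drop (Suc p) Y) (drop p Y)" by (metis suffix_drop suffix_imp_subseq)
  then have "subseq (take p Y @ drop (Suc p) Y) (take p Y @ drop p Y)" by (simp only: subseq_append')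
  then show ?thesis by (simp add: rm_def)
qed

lemma mset_rm: "p < length Y \<Longrightarrow> mset Y = add_mset (Y ! p) (mset (rm p Y))"
proof (induction Y arbitrary: p)
  case Nil then show ?case by simp
next
  case (Cons y Y) then show ?case by (cases p) auto
qed

lemma dl_subseq: "dl C s w = Some r \<Longrightarrow> subseq r w"
  by (induction w arbitrary: r) (auto split: if_splits)

lemma alt_Suc: "alt (Suc m) s t = s # alt m t s"
  unfolding alt_def by (simp add: upt_conv_Cons map_Suc_upt[symmetric] del: upt_Suc)

lemma alt_0[simp]: "alt 0 s t = []" by (simp add: alt_def)

lemma set_alt: "set (alt m s t) \<subseteq> {s, t}"
  unfolding alt_def by auto

lemma set_alt2: "m \<ge> 2 \<Longrightarrow> set (alt m s t) = {s, t}"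
proof -
  assume "m \<ge> 2"
  then obtain k where "m = Suc (Suc k)" by (metis add_2_eq_Suc le_Suc_ex)
  then show ?thesis using set_alt[of k s t] by (simp add: alt_Suc) (use set_alt[of k s t] in blast)
qed

lemma length_alt[simp]: "length (alt m s t) = m" by (simp add: alt_def)

lemma rd_alt: "s \<noteq> t \<Longrightarrow> \<not> C s t \<Longrightarrow> \<not> C t s \<Longrightarrow> rd C (alt m s t)"
proof (induction m arbitrary: s t)
  case 0 then show ?case by simp
next
  case (Suc m)
  have "rd C (alt m t s)" using Suc by auto
  moreover have "dl C s (alt m t s) = None"
    using Suc.prems by (cases m) (auto simp: alt_Suc)
  ultimately show ?case by (simp add: alt_Suc)
qed


context
  fixes S :: "'a set" and C :: "'a \<Rightarrow> 'a \<Rightarrow> bool"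
  assumes ra: "right_angled S C"
begin

lemma len_Cons_rd: "rd C W \<Longrightarrow> set W \<subseteq> S \<Longrightarrow> s \<in> S \<Longrightarrow> len S C (s # W) = length (ff C s W)"
proof -
  assume W: "rd C W" "set W \<subseteq> S" and s: "s \<in> S"
  have "len S C (s # W) = length (Phi C (s # W))" using len_Phi[OF ra] W s by simp
  also have "\<dots> = length (ff C s (Phi C W))" by simp
  also have "\<dots> = length (ff C s W)" using ff_sw[OF ra Phi_rd[OF ra W(1)]] sw_length by metis
  finally show ?thesis .
qed

lemma rdlen: "rd C W \<Longrightarrow> len S C W = length W" using rd_len[OF ra] .

lemma desc_rd: "rd C W \<Longrightarrow> set W \<subseteq> S \<Longrightarrow> s \<in> S \<Longrightarrow> desc S C s W \<longleftrightarrow> dl C s W \<noteq> None"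
proof -
  assume W: "rd C W" "set W \<subseteq> S" and s: "s \<in> S"
  have a: "len S C (s # W) = length (ff C s W)" using len_Cons_rd W s by blast
  have b: "len S C W = length W" using rdlen W by blast
  have c: "dl C s W \<noteq> None \<Longrightarrow> length W > 0" by (cases W) auto
  show ?thesis unfolding desc_def a b length_ff using c by auto
qed

lemma desc_eqW: "eqW S C w w' \<Longrightarrow> desc S C s w \<longleftrightarrow> desc S C s w'"
  unfolding desc_def using len_eqW eqW_Cons by metis

lemma Phi_props: "set w \<subseteq> S \<Longrightarrow> rd C (Phi C w) \<and> set (Phi C w) \<subseteq> S \<and> eqW S C (Phi C w) w \<and> length (Phi C w) = len S C w"
  using rd_Phi[OF ra] set_Phi Phi_eqW_self[OF ra] len_Phi[OF ra] by fastforce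

lemma desc_word: "set w \<subseteq> S \<Longrightarrow> s \<in> S \<Longrightarrow> rd C W \<Longrightarrow> set W \<subseteq> S \<Longrightarrow> eqW S C W w \<Longrightarrow>
   desc S C s w \<longleftrightarrow> dl C s W \<noteq> None"
  using desc_rd desc_eqW by metis

lemma len_Cons_cases: "set w \<subseteq> S \<Longrightarrow> s \<in> S \<Longrightarrow>
   (desc S C s w \<and> Suc (len S C (s # w)) = len S C w) \<or> (\<not> desc S C s w \<and> len S C (s # w) = Suc (len S C w))"
proof -
  assume w: "set w \<subseteq> S" and s: "s \<in> S"
  let ?W = "Phi C w"
  have P: "rd C ?W" "set ?W \<subseteq> S" "eqW S C ?W w" "length ?W = len S C w" using Phi_props[OF w] by auto
  have e: "len S C (s # w) = len S C (s # ?W)" using len_eqW eqW_Cons P(3) by (metis eqW_sym)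
  have "len S C (s # ?W) = length (ff C s ?W)" using len_Cons_rd P s by blast
  moreover have "desc S C s w \<longleftrightarrow> dl C s ?W \<noteq> None" using desc_word w s P by blast
  moreover have "dl C s ?W \<noteq> None \<Longrightarrow> length ?W > 0" by (cases ?W) auto
  ultimately show ?thesis using e P(4) length_ff[of C s ?W] by auto
qed

lemma nondesc_len: "set w \<subseteq> S \<Longrightarrow> s \<in> S \<Longrightarrow> \<not> desc S C s w \<Longrightarrow> len S C (s # w) = Suc (len S C w)"
  using len_Cons_cases by blast
lemma desc_len: "set w \<subseteq> S \<Longrightarrow> s \<in> S \<Longrightarrow> desc S C s w \<Longrightarrow> Suc (len S C (s # w)) = len S C w"
  using len_Cons_cases by blast

lemma eqW_ss: "s \<in> S \<Longrightarrow> eqW S C w (s # s # w)" using eqW_cancel eqW_sym by metis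

lemma desc_rdword: "set w \<subseteq> S \<Longrightarrow> s \<in> S \<Longrightarrow> desc S C s w \<Longrightarrow>
   \<exists>W'. rd C (s # W') \<and> set W' \<subseteq> S \<and> eqW S C w (s # W')"
proof -
  assume w: "set w \<subseteq> S" and s: "s \<in> S" and d: "desc S C s w"
  let ?W = "Phi C w"
  have P: "rd C ?W" "set ?W \<subseteq> S" "eqW S C ?W w" "length ?W = len S C w" using Phi_props[OF w] by auto
  obtain r where r: "dl C s ?W = Some r" using desc_word[OF w s P(1-3)] d by auto
  then obtain p q where pq: "?W = p @ s # q" "\<forall>x\<in>set p. C x s" "r = p @ q" using dl_Some_iff[OF ra] by blast
  have sw1: "sw C (s # r) ?W" using sw_comm[OF ra pq(2)] pq by simp
  then have e: "eqW S C w (s # r)" using P(3) sw_eqW eqW_sym eqW_trans by metis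
  have "length (s # r) = len S C (s # r)"
    using sw_length[OF sw1] P(4) len_eqW[OF e] by simp
  moreover have "set (s # r) \<subseteq> S" using sw_set[OF sw1] P(2) by simp
  ultimately have "rd C (s # r)" using len_rd[OF ra] by metis
  then show ?thesis using e \<open>set (s # r) \<subseteq> S\<close> by auto
qed

lemma len_pos_desc: "set w \<subseteq> S \<Longrightarrow> len S C w > 0 \<Longrightarrow> \<exists>s\<in>S. desc S C s w"
proof -
  assume w: "set w \<subseteq> S" and l: "len S C w > 0"
  let ?W = "Phi C w"
  have P: "rd C ?W" "set ?W \<subseteq> S" "eqW S C ?W w" "length ?W = len S C w" using Phi_props[OF w] by auto
  then obtain s W' where W: "?W = s # W'" using l by (cases ?W) auto
  then have s: "s \<in> S" using P(2) by auto
  have "dl C s ?W \<noteq> None" using W by simp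
  then show ?thesis using desc_word[OF w s P(1-3)] s by blast
qed

lemma len0: "set w \<subseteq> S \<Longrightarrow> len S C w = 0 \<Longrightarrow> eqW S C w []"
  using Phi_props eqW_sym by fastforce

lemma eqW_rev_app: "set a \<subseteq> S \<Longrightarrow> eqW S C (rev a @ a) []"
proof (induction a)
  case Nil then show ?case by simp
next
  case (Cons x a)
  have "eqW S C (rev a @ [x, x] @ a) (rev a @ a)" using eqW_ctx eqW_cancel[of x S C "[]"] Cons.prems
    by (metis append_Nil list.set_intros(1) subset_code(1) eqW_ctx)
  then show ?case using Cons eqW_trans by fastforce
qed

lemma eqW_app_rev: "set a \<subseteq> S \<Longrightarrow> eqW S C (a @ rev a) []"
  using eqW_rev_app[of "rev a"] by simp

lemma cancel_left: "set a \<subseteq> S \<Longrightarrow> eqW S C (a @ x) (a @ y) \<Longrightarrow> eqW S C x y"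
proof -
  assume a: "set a \<subseteq> S" and e: "eqW S C (a @ x) (a @ y)"
  have "eqW S C (rev a @ a @ x) (rev a @ a @ y)" using eqW_app1 e by blast
  moreover have "eqW S C (rev a @ a @ x) x" using eqW_app2[OF eqW_rev_app[OF a], of x] by simp
  moreover have "eqW S C (rev a @ a @ y) y" using eqW_app2[OF eqW_rev_app[OF a], of y] by simp
  ultimately show ?thesis by (meson eqW_sym eqW_trans)
qed

lemma cancel_right: "set a \<subseteq> S \<Longrightarrow> eqW S C (x @ a) (y @ a) \<Longrightarrow> eqW S C x y"
proof -
  assume a: "set a \<subseteq> S" and e: "eqW S C (x @ a) (y @ a)"
  have "eqW S C (x @ a @ rev a) (y @ a @ rev a)" using eqW_app2[OF e, of "rev a"] by simp
  moreover have "eqW S C (x @ a @ rev a) x" using eqW_app1[OF eqW_app_rev[OF a], of x] by simp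
  moreover have "eqW S C (y @ a @ rev a) y" using eqW_app1[OF eqW_app_rev[OF a], of y] by simp
  ultimately show ?thesis by (meson eqW_sym eqW_trans)
qed

lemma gen_cancel: "set X \<subseteq> S \<Longrightarrow> eqW S C (p # X) (s # X) \<Longrightarrow> p = s"
proof -
  assume X: "set X \<subseteq> S" and e: "eqW S C (p # X) (s # X)"
  then have "eqW S C [p] [s]" using cancel_right[OF X, of "[p]" "[s]"] by simp
  then have "sw C (Phi C [p]) (Phi C [s])" using Phi_eqW[OF ra] by blast
  then have "sw C [p] [s]" by (simp add: ff_def)
  then have "mset [p] = mset [s]" by (rule sw_mset)
  then show ?thesis by simp
qed

lemma len_single: "s \<in> S \<Longrightarrow> len S C [s] = 1"
  using rdlen[of "[s]"] by simp

lemma len_alt: "s \<noteq> t \<Longrightarrow> \<not> C s t \<Longrightarrow> len S C (alt m s t) = m"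
  using rdlen rd_alt Csym[OF ra] by (metis length_alt)

end


lemma subseq_set: "subseq U W \<Longrightarrow> set U \<subseteq> set W"
  by (induction rule: list_emb.induct) auto

lemma subseq_two: "subseq M [a, b] \<Longrightarrow> M = [] \<or> M = [a] \<or> M = [b] \<or> M = [a, b]"
proof (cases M)
  case Nil then show ?thesis by simp
next
  case (Cons x M')
  assume "subseq M [a, b]"
  then show ?thesis using Cons by (cases M') (auto split: if_splits)
qed

lemma le_len: "bruhat_le S C u w \<Longrightarrow> len S C u \<le> len S C w"
  unfolding bruhat_le_def using len_le list_emb_length by fastforce

lemma le_eq: "bruhat_le S C u w \<Longrightarrow> len S C u = len S C w \<Longrightarrow> eqW S C u w"
proof -
  assume "bruhat_le S C u w" "len S C u = len S C w"
  then obtain w' u' where a: "eqW S C w' w" "length w' = len S C w" "subseq u' w'" "eqW S C u' u"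
    unfolding bruhat_le_def by blast
  have "len S C u \<le> length u'" using len_le a(4) by blast
  then have "length u' = length w'" using a list_emb_length \<open>len S C u = len S C w\<close> by fastforce
  then have "u' = w'" using subseq_same_length a(3) by blast
  then show ?thesis using a eqW_sym eqW_trans by metis
qed

lemma le_refl: "bruhat_le S C w w"
proof -
  obtain w' where "eqW S C w' w" "length w' = len S C w" using len_ex by blast
  then show ?thesis unfolding bruhat_le_def by blast
qed

lemma le_cong: "eqW S C u u' \<Longrightarrow> eqW S C w w' \<Longrightarrow> bruhat_le S C u w \<Longrightarrow> bruhat_le S C u' w'"
proof -
  assume e: "eqW S C u u'" "eqW S C w w'" and "bruhat_le S C u w"
  then obtain v' x' where a: "eqW S C v' w" "length v' = len S C w" "subseq x' v'" "eqW S C x' u"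
    unfolding bruhat_le_def by blast
  have "eqW S C v' w'" "eqW S C x' u'" using a e eqW_trans by blast+
  moreover have "length v' = len S C w'" using a(2) len_eqW[OF e(2)] by simp
  ultimately show ?thesis unfolding bruhat_le_def using a(3) by blast
qed

lemma lt_cong: "eqW S C u u' \<Longrightarrow> eqW S C w w' \<Longrightarrow> bruhat_lt S C u w \<Longrightarrow> bruhat_lt S C u' w'"
  unfolding bruhat_lt_def using le_cong eqW_trans eqW_sym by (meson eqW_trans)

lemma cover_cong: "eqW S C u u' \<Longrightarrow> eqW S C w w' \<Longrightarrow> bruhat_cover S C u w \<Longrightarrow> bruhat_cover S C u' w'"
proof -
  assume e: "eqW S C u u'" "eqW S C w w'" and c: "bruhat_cover S C u w"
  have e': "eqW S C u' u" "eqW S C w' w" using e eqW_sym by blast+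
  show ?thesis unfolding bruhat_cover_def
    using c lt_cong[OF e] lt_cong[OF e'(1) eqW_refl] lt_cong[OF eqW_refl e'(2)] unfolding bruhat_cover_def
    by blast
qed

lemma lt_len: "bruhat_lt S C u w \<Longrightarrow> len S C u < len S C w"
  unfolding bruhat_lt_def using le_len le_eq le_neq_implies_less by blast

lemma cover_of_len: "bruhat_le S C u w \<Longrightarrow> len S C w = Suc (len S C u) \<Longrightarrow> bruhat_cover S C u w"
proof -
  assume le: "bruhat_le S C u w" and l: "len S C w = Suc (len S C u)"
  have "\<not> eqW S C u w" using len_eqW l by fastforce
  then have "bruhat_lt S C u w" using le bruhat_lt_def by blast
  moreover have "\<not> (bruhat_lt S C u z \<and> bruhat_lt S C z w)" for z
    using lt_len[of S C u z] lt_len[of S C z w] l by auto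
  ultimately show ?thesis unfolding bruhat_cover_def by blast
qed

context
  fixes S :: "'a set" and C :: "'a \<Rightarrow> 'a \<Rightarrow> bool"
  assumes ra: "right_angled S C"
begin

lemma subseq_swst: "swst C A B \<Longrightarrow> subseq U A \<Longrightarrow> \<exists>U'. subseq U' B \<and> sw C U U'"
proof -
  assume "swst C A B" "subseq U A"
  then obtain xs ys a b where ab: "C a b" "A = xs @ [a,b] @ ys" "B = xs @ [b,a] @ ys"
    unfolding swst_def by blast
  obtain U1 U' where "U = U1 @ U'" "subseq U1 xs" "subseq U' ([a,b] @ ys)"
    using \<open>subseq U A\<close> ab(2) subseq_append_iff by metis
  moreover obtain M U3 where "U' = M @ U3" "subseq M [a,b]" "subseq U3 ys"
    using calculation(3) subseq_append_iff by metis
  ultimately have U: "U = U1 @ M @ U3" "subseq U1 xs" "subseq M [a, b]" "subseq U3 ys" by auto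
  define M' where "M' = (if M = [a, b] then [b, a] else M)"
  have "subseq M' [b, a] \<and> sw C M M'"
  proof -
    have "sw C [a, b] [b, a]"
    proof -
      have "swst C ([] @ [a, b] @ []) ([] @ [b, a] @ [])" unfolding swst_def using ab(1) by blast
      then show ?thesis by simp
    qed
    then show ?thesis using subseq_two[OF U(3)] M'_def by auto
  qed
  then have "subseq (M' @ U3) ([b, a] @ ys)" using U(4) list_emb_append_mono by blast
  then have "subseq (U1 @ M' @ U3) (xs @ [b, a] @ ys)" using U(2) list_emb_append_mono by blast
  then have "subseq (U1 @ M' @ U3) B" using ab(3) by simp
  moreover have "sw C U (U1 @ M' @ U3)" using U(1) sw_ctx \<open>subseq M' [b, a] \<and> sw C M M'\<close> by blast
  ultimately show ?thesis by blast
qed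

lemma subseq_sw: "sw C A B \<Longrightarrow> subseq U A \<Longrightarrow> \<exists>U'. subseq U' B \<and> sw C U U'"
proof (induction arbitrary: U rule: rtranclp_induct)
  case base then show ?case by blast
next
  case (step B D)
  then obtain U' where "subseq U' B" "sw C U U'" by blast
  then obtain U'' where "subseq U'' D" "sw C U' U''" using subseq_swst step by blast
  then show ?case using \<open>sw C U U'\<close> by (meson rtranclp_trans)
qed

lemma le_fixed: "rd C W \<Longrightarrow> set W \<subseteq> S \<Longrightarrow> eqW S C W w \<Longrightarrow>
   bruhat_le S C u w \<longleftrightarrow> (\<exists>U. subseq U W \<and> eqW S C U u)"
proof
  assume W: "rd C W" "set W \<subseteq> S" "eqW S C W w"
  assume "bruhat_le S C u w"
  then obtain w' u' where a: "eqW S C w' w" "length w' = len S C w" "subseq u' w'" "eqW S C u' u"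
    unfolding bruhat_le_def by blast
  have ww: "eqW S C w' W" using a(1) W(3) eqW_sym eqW_trans by metis
  then have "set w' \<subseteq> S" using eqW_set W(2) eqW_sym by metis
  moreover have "len S C w' = length w'" using a(2) len_eqW[OF a(1)] by simp
  ultimately have "rd C w'" using len_rd[OF ra] by metis
  then have "sw C w' W" using rd_sw[OF ra _ W(1) ww] by blast
  then obtain U where "subseq U W" "sw C u' U" using subseq_sw a(3) by blast
  then show "\<exists>U. subseq U W \<and> eqW S C U u" using a(4) sw_eqW eqW_sym eqW_trans by metis
next
  assume W: "rd C W" "set W \<subseteq> S" "eqW S C W w"
  assume "\<exists>U. subseq U W \<and> eqW S C U u"
  moreover have "length W = len S C w" using rdlen[OF ra W(1)] len_eqW[OF W(3)] by simp
  ultimately show "bruhat_le S C u w" unfolding bruhat_le_def using W(3) by blast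
qed

lemma le_fixedI: "rd C W \<Longrightarrow> set W \<subseteq> S \<Longrightarrow> eqW S C W w \<Longrightarrow> subseq U W \<Longrightarrow> eqW S C U u \<Longrightarrow> bruhat_le S C u w"
  using le_fixed by blast

lemma le_fixedE: "rd C W \<Longrightarrow> set W \<subseteq> S \<Longrightarrow> eqW S C W w \<Longrightarrow> bruhat_le S C u w \<Longrightarrow> \<exists>U. subseq U W \<and> eqW S C U u"
  using le_fixed by blast

lemma rd_sub: "set U \<subseteq> S \<Longrightarrow> \<exists>U'. subseq U' U \<and> eqW S C U' U \<and> rd C U'"
proof (induction U)
  case Nil show ?case by (intro exI[of _ "[]"]) simp
next
  case (Cons x U)
  then obtain V where V: "subseq V U" "eqW S C V U" "rd C V" by auto
  have x: "x \<in> S" using Cons.prems by simp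
  show ?case
  proof (cases "dl C x V")
    case None
    then have "rd C (x # V)" using V by simp
    moreover have "eqW S C (x # V) (x # U)" using eqW_Cons[OF V(2)] .
    moreover have "subseq (x # V) (x # U)" using V(1) by simp
    ultimately show ?thesis using V by blast
  next
    case (Some r)
    have "eqW S C r (x # V)" using ff_eqW[OF ra x, of V] Some by (simp add: ff_def)
    then have "eqW S C r (x # U)" using eqW_Cons[OF V(2)] eqW_trans by blast
    moreover have "subseq r (x # U)"
    proof -
      have "subseq r V" using dl_subseq[OF Some] .
      then have "subseq r U" using V(1) by (rule subseq_order.order_trans)
      then show ?thesis by (rule list_emb_Cons)
    qed
    moreover have "rd C r"
    proof -
      obtain p q where "V = p @ x # q" "\<forall>y\<in>set p. C y x" "r = p @ q" using Some dl_Some_iff[OF ra] by blast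
      then show ?thesis using rd_del[OF ra] V(3) by blast
    qed
    ultimately show ?thesis by blast
  qed
qed

lemma le_fixed_rd: "rd C W \<Longrightarrow> set W \<subseteq> S \<Longrightarrow> eqW S C W w \<Longrightarrow> bruhat_le S C u w \<Longrightarrow>
   \<exists>U. subseq U W \<and> eqW S C U u \<and> rd C U"
proof -
  assume W: "rd C W" "set W \<subseteq> S" "eqW S C W w" and le: "bruhat_le S C u w"
  then obtain U where U: "subseq U W" "eqW S C U u" using le_fixed by blast
  have "set U \<subseteq> S" using subseq_set[OF U(1)] W(2) by blast
  then obtain U' where "subseq U' U" "eqW S C U' U" "rd C U'" using rd_sub by blast
  then show ?thesis using U subseq_order.order_trans[of U' U W] eqW_trans[of S C U' U u] by blast
qed

end


context
  fixes S :: "'a set" and C :: "'a \<Rightarrow> 'a \<Rightarrow> bool"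
  assumes ra: "right_angled S C"
begin

lemma le_trans: "set w \<subseteq> S \<Longrightarrow> bruhat_le S C u v \<Longrightarrow> bruhat_le S C v w \<Longrightarrow> bruhat_le S C u w"
proof -
  assume w: "set w \<subseteq> S" and uv: "bruhat_le S C u v" and vw: "bruhat_le S C v w"
  have P: "rd C (Phi C w)" "set (Phi C w) \<subseteq> S" "eqW S C (Phi C w) w" using Phi_props[OF ra w] by auto
  obtain V where V: "subseq V (Phi C w)" "eqW S C V v" "rd C V" using le_fixed_rd[OF ra P vw] by blast
  have Vs: "set V \<subseteq> S" using subseq_set[OF V(1)] P(2) by blast
  obtain U where U: "subseq U V" "eqW S C U u" using le_fixedE[OF ra V(3) Vs V(2) uv] by blast
  have "subseq U (Phi C w)" using U(1) V(1) by (rule subseq_order.order_trans)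
  then show ?thesis using le_fixedI[OF ra P _ U(2)] by blast
qed

lemma lifting:
  assumes a: "set a \<subseteq> S" and b: "set b \<subseteq> S" and s: "s \<in> S"
    and le: "bruhat_le S C a b" and db: "desc S C s b" and da: "\<not> desc S C s a"
  shows "bruhat_le S C a (s # b)"
proof -
  obtain B' where B: "rd C (s # B')" "set B' \<subseteq> S" "eqW S C b (s # B')"
    using desc_rdword[OF ra b s db] by blast
  have Bs: "set (s # B') \<subseteq> S" using B(2) s by simp
  obtain A where A: "subseq A (s # B')" "eqW S C A a" "rd C A"
    using le_fixed_rd[OF ra B(1) Bs eqW_sym[OF B(3)] le] by blast
  from subseq_Cons_cases[OF A(1)] show ?thesis
  proof
    assume "subseq A B'"
    have "eqW S C (s # b) (s # s # B')" using eqW_Cons[OF B(3)] .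
    also have "eqW S C (s # s # B') B'" using eqW_cancel[OF s] .
    finally have "eqW S C B' (s # b)" by (rule eqW_sym)
    moreover have "rd C B'" using B(1) by simp
    ultimately show ?thesis using le_fixedI[OF ra _ B(2) _ \<open>subseq A B'\<close> A(2)] by blast
  next
    assume "\<exists>U1. A = s # U1 \<and> subseq U1 B'"
    then obtain A1 where A1: "A = s # A1" by blast
    have "len S C (s # a) = len S C (s # A)" using len_eqW eqW_Cons[OF eqW_sym[OF A(2)]] by blast
    also have "\<dots> = len S C A1" using len_eqW[OF eqW_cancel[OF s]] A1 by simp
    also have "\<dots> \<le> length A1" by (rule len_le_length)
    also have "\<dots> < length A" using A1 by simp
    also have "\<dots> = len S C a" using rdlen[OF ra A(3)] len_eqW[OF A(2)] by simp
    finally have "desc S C s a" unfolding desc_def .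
    then show ?thesis using da by blast
  qed
qed

lemma chain:
  "set w \<subseteq> S \<Longrightarrow> set u \<subseteq> S \<Longrightarrow> bruhat_lt S C u w \<Longrightarrow>
   \<exists>z. set z \<subseteq> S \<and> bruhat_lt S C u z \<and> bruhat_le S C z w \<and> len S C z = Suc (len S C u)"
proof (induction "len S C w" arbitrary: u w rule: less_induct)
  case less
  note ws = less.prems(1) and us = less.prems(2) and lt = less.prems(3)
  let ?W = "Phi C w"
  have P: "rd C ?W" "set ?W \<subseteq> S" "eqW S C ?W w" "length ?W = len S C w" using Phi_props[OF ra ws] by auto
  have ll: "len S C u < len S C w" using lt_len[OF lt] .
  then obtain s W1 where W: "?W = s # W1" using P(4) by (cases ?W) auto
  have s: "s \<in> S" and W1s: "set W1 \<subseteq> S" using P(2) W by auto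
  have W1rd: "rd C W1" using P(1) W by simp
  have W1len: "len S C W1 = length W1" using rdlen[OF ra W1rd] .
  have wlen: "len S C w = Suc (len S C W1)" using P(4) W W1len by simp
  have lew: "bruhat_le S C u w" using lt bruhat_lt_def by blast
  obtain U where U: "subseq U ?W" "eqW S C U u" "rd C U" using le_fixed_rd[OF ra P(1-3) lew] by blast
  have le_w: "bruhat_le S C z w" if "bruhat_le S C z W1" for z
  proof -
    have "subseq W1 (s # W1)" by (rule list_emb_Cons) simp
    then have "subseq W1 ?W" using W by simp
    then have "bruhat_le S C W1 w" using le_fixedI[OF ra P(1-3) _ eqW_refl] by blast
    then show ?thesis using le_trans[OF ws that] by blast
  qed
  have top: ?case if "eqW S C u W1"
  proof -
    have "len S C w = Suc (len S C u)" using wlen len_eqW[OF that] by simp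
    then show ?thesis using ws lt le_refl by blast
  qed
  have viaW1: ?case if "bruhat_le S C u W1"
  proof (cases "eqW S C u W1")
    case True then show ?thesis using top by blast
  next
    case False
    then have "bruhat_lt S C u W1" using that bruhat_lt_def by blast
    moreover have "len S C W1 < len S C w" using wlen by simp
    ultimately obtain z where "set z \<subseteq> S" "bruhat_lt S C u z" "bruhat_le S C z W1" "len S C z = Suc (len S C u)"
      using less.hyps[OF _ W1s us] by blast
    then show ?thesis using le_w by blast
  qed
  have sub: "subseq U (s # W1)" using U(1) W by simp
  show ?case
  proof (cases "subseq U W1")
    case True
    then have "bruhat_le S C u W1" using le_fixedI[OF ra W1rd W1s eqW_refl _ U(2)] by blast
    then show ?thesis using viaW1 by blast
  next
    case False
    then have "\<exists>U1. U = s # U1 \<and> subseq U1 W1" using subseq_Cons_cases[OF sub] by blast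
    then obtain U1 where U1: "U = s # U1" "subseq U1 W1" by blast
    have U1rd: "rd C U1" using U(3) U1 by simp
    have U1s: "set U1 \<subseteq> S" using subseq_set[OF U1(2)] W1s by blast
    have U1len: "len S C U1 = length U1" using rdlen[OF ra U1rd] .
    have ulen: "len S C u = Suc (len S C U1)" using rdlen[OF ra U(3)] len_eqW[OF U(2)] U1 U1len by simp
    have leU1: "bruhat_le S C U1 W1" using le_fixedI[OF ra W1rd W1s eqW_refl U1(2) eqW_refl] by blast
    have "\<not> eqW S C U1 W1"
    proof
      assume "eqW S C U1 W1"
      then have "eqW S C (s # U1) (s # W1)" by (rule eqW_Cons)
      then have "eqW S C U ?W" using U1 W by simp
      then have "eqW S C u ?W" using U(2) eqW_sym eqW_trans by blast
      then have "eqW S C u w" using P(3) eqW_trans by blast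
      then show False using lt bruhat_lt_def by blast
    qed
    then have ltU1: "bruhat_lt S C U1 W1" using leU1 bruhat_lt_def by blast
    have "len S C W1 < len S C w" using wlen by simp
    then obtain z1 where z1: "set z1 \<subseteq> S" "bruhat_lt S C U1 z1" "bruhat_le S C z1 W1" "len S C z1 = Suc (len S C U1)"
      using less.hyps[OF _ W1s U1s ltU1] by blast
    show ?thesis
    proof (cases "desc S C s z1")
      case False
      have zlen: "len S C (s # z1) = Suc (len S C u)" using nondesc_len[OF ra z1(1) s False] z1(4) ulen by simp
      obtain Z1 where Z1: "subseq Z1 W1" "eqW S C Z1 z1" using le_fixedE[OF ra W1rd W1s eqW_refl z1(3)] by blast
      have "subseq (s # Z1) ?W" using Z1(1) W by simp
      moreover have "eqW S C (s # Z1) (s # z1)" using eqW_Cons[OF Z1(2)] .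
      ultimately have le1: "bruhat_le S C (s # z1) w" using le_fixedI[OF ra P(1-3)] by blast
      let ?Z = "Phi C z1"
      have Pz: "rd C ?Z" "set ?Z \<subseteq> S" "eqW S C ?Z z1" "length ?Z = len S C z1" using Phi_props[OF ra z1(1)] by auto
      have e1: "eqW S C (s # ?Z) (s # z1)" using eqW_Cons[OF Pz(3)] .
      have sZ: "set (s # ?Z) \<subseteq> S" using Pz(2) s by simp
      have "len S C (s # ?Z) = length (s # ?Z)"
        using len_eqW[OF e1] nondesc_len[OF ra z1(1) s False] Pz(4) by simp
      then have rdZ: "rd C (s # ?Z)" using len_rd[OF ra sZ] by simp
      obtain V where V: "subseq V ?Z" "eqW S C V U1"
        using le_fixedE[OF ra Pz(1-3)] z1(2) unfolding bruhat_lt_def by blast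
      have "subseq (s # V) (s # ?Z)" using V(1) by simp
      moreover have "eqW S C (s # V) u" using eqW_trans[OF eqW_Cons[OF V(2)]] U(2) U1 by blast
      ultimately have "bruhat_le S C u (s # z1)" using le_fixedI[OF ra rdZ sZ e1] by blast
      moreover have "\<not> eqW S C u (s # z1)" using len_eqW zlen by fastforce
      ultimately have "bruhat_lt S C u (s # z1)" using bruhat_lt_def by blast
      moreover have "set (s # z1) \<subseteq> S" using z1(1) s by simp
      ultimately show ?thesis using le1 zlen by blast
    next
      case True
      have nd: "\<not> desc S C s U1"
      proof -
        have "len S C (s # U1) = len S C u" using len_eqW[OF U(2)] U1 by simp
        then show ?thesis unfolding desc_def using ulen by simp
      qed
      have "bruhat_le S C U1 z1" using z1(2) bruhat_lt_def by blast
      then have "bruhat_le S C U1 (s # z1)" using lifting[OF U1s z1(1) s _ True nd] by blast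
      moreover have "len S C (s # z1) = len S C U1" using desc_len[OF ra z1(1) s True] z1(4) by simp
      ultimately have "eqW S C U1 (s # z1)" using le_eq[of S C U1 "s # z1"] by simp
      then have "eqW S C (s # U1) (s # s # z1)" by (rule eqW_Cons)
      then have "eqW S C (s # U1) z1" using eqW_cancel[OF s] eqW_trans by blast
      then have "eqW S C z1 U" using U1 eqW_sym by simp
      then have "eqW S C z1 u" using U(2) eqW_trans by blast
      then have "bruhat_le S C u W1" using le_cong[OF _ eqW_refl z1(3)] by blast
      from viaW1[OF this] show ?thesis .
    qed
  qed
qed

end


lemma blocker_pos: "dl C s Y = None \<Longrightarrow> p < length Y \<Longrightarrow> dl C s (rm p Y) \<noteq> None \<Longrightarrow>
  q < length Y \<Longrightarrow> dl C s (rm q Y) \<noteq> None \<Longrightarrow> p = q \<and> \<not> C (Y ! p) s"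
proof (induction Y arbitrary: p q)
  case Nil then show ?case by simp
next
  case (Cons y Y)
  show ?case
  proof (cases "C y s")
    case True
    have ys: "y \<noteq> s" using Cons.prems(1) by (auto split: if_splits)
    have dY: "dl C s Y = None" using Cons.prems(1) True ys by (auto split: if_splits)
    have p0: "p \<noteq> 0" using Cons.prems(3) dY by (cases p) auto
    have q0: "q \<noteq> 0" using Cons.prems(5) dY by (cases q) auto
    obtain p' q' where pq: "p = Suc p'" "q = Suc q'" using p0 q0 not0_implies_Suc by blast
    have "dl C s (rm p' Y) \<noteq> None" "dl C s (rm q' Y) \<noteq> None"
      using Cons.prems(3,5) pq True ys by (auto split: if_splits)
    then show ?thesis using Cons.IH[OF dY, of p' q'] Cons.prems(2,4) pq by auto
  next
    case False
    have ys: "y \<noteq> s" using Cons.prems(1) by (auto split: if_splits)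
    have p0: "p = 0" using Cons.prems(3) False ys by (cases p) auto
    have q0: "q = 0" using Cons.prems(5) False ys by (cases q) auto
    show ?thesis using p0 q0 False by simp
  qed
qed

lemma dl_app_notin: "dl C s (A @ V) \<noteq> None \<Longrightarrow> s \<notin> set A \<Longrightarrow> (\<forall>a\<in>set A. C a s) \<and> dl C s V \<noteq> None"
  by (induction A) (auto split: if_splits)

context
  fixes S :: "'a set" and C :: "'a \<Rightarrow> 'a \<Rightarrow> bool"
  assumes ra: "right_angled S C"
begin

lemma cover_len: "set x \<subseteq> S \<Longrightarrow> set y \<subseteq> S \<Longrightarrow> bruhat_cover S C x y \<Longrightarrow> len S C y = Suc (len S C x)"
proof -
  assume xs: "set x \<subseteq> S" and ys: "set y \<subseteq> S" and c: "bruhat_cover S C x y"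
  then have lt: "bruhat_lt S C x y" unfolding bruhat_cover_def by blast
  obtain z where z: "set z \<subseteq> S" "bruhat_lt S C x z" "bruhat_le S C z y" "len S C z = Suc (len S C x)"
    using chain[OF ra ys xs lt] by blast
  have "eqW S C z y"
  proof (rule ccontr)
    assume "\<not> eqW S C z y"
    then have "bruhat_lt S C z y" using z(3) unfolding bruhat_lt_def by blast
    moreover have "z \<in> words S" using z(1) unfolding words_def by simp
    ultimately show False using c z(2) unfolding bruhat_cover_def by blast
  qed
  then have "len S C z = len S C y" by (rule len_eqW)
  then show ?thesis using z(4) by simp
qed

lemma cover_word: "set x \<subseteq> S \<Longrightarrow> set y \<subseteq> S \<Longrightarrow> bruhat_cover S C x y \<Longrightarrow>
   rd C Y \<Longrightarrow> set Y \<subseteq> S \<Longrightarrow> eqW S C Y y \<Longrightarrow>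
   \<exists>p < length Y. rd C (rm p Y) \<and> eqW S C (rm p Y) x"
proof -
  assume xs: "set x \<subseteq> S" and ys: "set y \<subseteq> S" and c: "bruhat_cover S C x y"
    and Y: "rd C Y" "set Y \<subseteq> S" "eqW S C Y y"
  have le: "bruhat_le S C x y" using c unfolding bruhat_cover_def bruhat_lt_def by blast
  obtain U where U: "subseq U Y" "eqW S C U x" "rd C U" using le_fixed_rd[OF ra Y le] by blast
  have "length U = len S C x" using rdlen[OF ra U(3)] len_eqW[OF U(2)] by simp
  moreover have "length Y = len S C y" using rdlen[OF ra Y(1)] len_eqW[OF Y(3)] by simp
  ultimately have "Suc (length U) = length Y" using cover_len[OF xs ys c] by simp
  then obtain p where "p < length Y" "U = rm p Y" using subseq_rm[OF U(1)] by blast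
  then show ?thesis using U by blast
qed

lemma peel:
  assumes xs: "set x \<subseteq> S" and ys: "set y \<subseteq> S" and s: "s \<in> S"
    and c: "bruhat_cover S C x y" and dx: "desc S C s x" and dy: "desc S C s y"
  shows "bruhat_cover S C (s # x) (s # y)"
proof -
  obtain Y' where Y: "rd C (s # Y')" "set Y' \<subseteq> S" "eqW S C y (s # Y')"
    using desc_rdword[OF ra ys s dy] by blast
  have Ys: "set (s # Y') \<subseteq> S" using Y(2) s by simp
  obtain p where p: "p < length (s # Y')" "rd C (rm p (s # Y'))" "eqW S C (rm p (s # Y')) x"
    using cover_word[OF xs ys c Y(1) Ys eqW_sym[OF Y(3)]] by blast
  have p0: "p \<noteq> 0"
  proof
    assume "p = 0"
    then have "eqW S C Y' x" using p(3) by simp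
    then have "eqW S C (s # Y') (s # x)" by (rule eqW_Cons)
    then have "eqW S C (s # x) (s # Y')" by (rule eqW_sym)
    then have "eqW S C (s # x) y" using eqW_trans[OF _ eqW_sym[OF Y(3)]] by blast
    then have "len S C (s # x) = len S C y" by (rule len_eqW)
    then have "len S C (s # x) = Suc (len S C x)" using cover_len[OF xs ys c] by simp
    then show False using dx unfolding desc_def by simp
  qed
  then obtain p' where p': "p = Suc p'" using not0_implies_Suc by blast
  have "eqW S C (s # rm p' Y') x" using p(3) p' by simp
  then have "eqW S C (s # s # rm p' Y') (s # x)" by (rule eqW_Cons)
  then have e1: "eqW S C (rm p' Y') (s # x)" using eqW_trans[OF eqW_sym[OF eqW_cancel[OF s]]] by blast
  have e2: "eqW S C Y' (s # y)"
  proof -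
    have "eqW S C (s # y) (s # s # Y')" using eqW_Cons[OF Y(3)] .
    then have "eqW S C (s # s # Y') (s # y)" by (rule eqW_sym)
    then show ?thesis using eqW_trans[OF eqW_sym[OF eqW_cancel[OF s]]] by blast
  qed
  have "bruhat_le S C (s # x) (s # y)"
    using le_fixedI[OF ra _ Y(2) e2 rm_subseq e1] Y(1) by simp
  moreover have "len S C (s # y) = Suc (len S C (s # x))"
    using desc_len[OF ra xs s dx] desc_len[OF ra ys s dy] cover_len[OF xs ys c] by simp
  ultimately show ?thesis by (rule cover_of_len)
qed

lemma nondesc_cover:
  assumes xs: "set x \<subseteq> S" and ys: "set y \<subseteq> S" and s: "s \<in> S"
    and c: "bruhat_cover S C x y" and dx: "\<not> desc S C s x" and dy: "desc S C s y"
  shows "eqW S C x (s # y)"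
proof -
  have le: "bruhat_le S C x y" using c unfolding bruhat_cover_def bruhat_lt_def by blast
  have "bruhat_le S C x (s # y)" using lifting[OF ra xs ys s le dy dx] .
  moreover have "len S C x = len S C (s # y)"
    using desc_len[OF ra ys s dy] cover_len[OF xs ys c] by simp
  ultimately show ?thesis using le_eq by blast
qed

lemma blocker_word:
  assumes xs: "set x \<subseteq> S" and ys: "set y \<subseteq> S" and s: "s \<in> S"
    and c: "bruhat_cover S C x y" and dx: "desc S C s x" and dy: "\<not> desc S C s y"
    and Y: "rd C Y" "set Y \<subseteq> S" "eqW S C Y y"
  shows "\<exists>p < length Y. rd C (rm p Y) \<and> eqW S C (rm p Y) x \<and> dl C s (rm p Y) \<noteq> None \<and> dl C s Y = None"
proof -
  obtain p where p: "p < length Y" "rd C (rm p Y)" "eqW S C (rm p Y) x"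
    using cover_word[OF xs ys c Y] by blast
  have rs: "set (rm p Y) \<subseteq> S" using subseq_set[OF rm_subseq[of p Y]] Y(2) by (rule subset_trans)
  have "dl C s (rm p Y) \<noteq> None" using desc_word[OF ra xs s p(2) rs p(3)] dx by blast
  moreover have "dl C s Y = None" using desc_word[OF ra ys s Y] dy by blast
  ultimately show ?thesis using p by auto
qed

lemma blocker:
  assumes x1s: "set x1 \<subseteq> S" and x2s: "set x2 \<subseteq> S" and ys: "set y \<subseteq> S" and s: "s \<in> S"
    and c1: "bruhat_cover S C x1 y" and c2: "bruhat_cover S C x2 y"
    and d1: "desc S C s x1" and d2: "desc S C s x2" and dy: "\<not> desc S C s y"
  shows "eqW S C x1 x2"
proof -
  let ?Y = "Phi C y"
  have P: "rd C ?Y" "set ?Y \<subseteq> S" "eqW S C ?Y y" using Phi_props[OF ra ys] by auto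
  obtain p where p: "p < length ?Y" "eqW S C (rm p ?Y) x1" "dl C s (rm p ?Y) \<noteq> None" "dl C s ?Y = None"
    using blocker_word[OF x1s ys s c1 d1 dy P] by blast
  obtain q where q: "q < length ?Y" "eqW S C (rm q ?Y) x2" "dl C s (rm q ?Y) \<noteq> None"
    using blocker_word[OF x2s ys s c2 d2 dy P] by blast
  have "p = q" using blocker_pos[OF p(4) p(1) p(3) q(1) q(3)] by blast
  then show ?thesis using eqW_trans[OF eqW_sym[OF p(2)]] q(2) by simp
qed

lemma desc_comm:
  assumes ws: "set w \<subseteq> S" and s: "s \<in> S" and t: "t \<in> S"
    and ds: "desc S C s w" and dt: "desc S C t w" and st: "s \<noteq> t"
  shows "C s t \<and> (\<exists>Z. rd C (s # t # Z) \<and> set Z \<subseteq> S \<and> eqW S C w (s # t # Z))"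
proof -
  obtain W' where W: "rd C (s # W')" "set W' \<subseteq> S" "eqW S C w (s # W')"
    using desc_rdword[OF ra ws s ds] by blast
  have sW: "set (s # W') \<subseteq> S" using W(2) s by simp
  have "dl C t (s # W') \<noteq> None" using desc_word[OF ra ws t W(1) sW eqW_sym[OF W(3)]] dt by blast
  then have Cst: "C s t" and dW: "dl C t W' \<noteq> None" using st by (auto split: if_splits)
  then obtain r where r: "dl C t W' = Some r" by blast
  then obtain P Q where PQ: "W' = P @ t # Q" "\<forall>x\<in>set P. C x t" "r = P @ Q" using dl_Some_iff[OF ra] by blast
  have sw1: "sw C (s # t # r) (s # W')" using sw_Cons[OF sw_comm[OF ra PQ(2)]] PQ by simp
  have e: "eqW S C w (s # t # r)" using eqW_trans[OF W(3) eqW_sym[OF sw_eqW[OF sw1]]] .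
  have rs: "set r \<subseteq> S" using sw_set[OF sw1] sW by auto
  have "len S C (s # t # r) = length (s # t # r)"
    using rdlen[OF ra W(1)] len_eqW[OF sw_eqW[OF sw1]] sw_length[OF sw1] by simp
  moreover have "set (s # t # r) \<subseteq> S" using rs s t by simp
  ultimately have "rd C (s # t # r)" using len_rd[OF ra, of "s # t # r"] by simp
  then show ?thesis using Cst e rs by blast
qed

lemma desc_D4:
  assumes ws: "set w \<subseteq> S" and s: "s \<in> S" and r: "r \<in> S"
    and dr: "desc S C r w" and Crs: "C r s" and ds: "\<not> desc S C s w"
  shows "desc S C r (s # w)"
proof -
  have "len S C (s # w) = Suc (len S C w)" using nondesc_len[OF ra ws s ds] .
  moreover have "eqW S C (r # s # w) (s # r # w)"
  proof -
    have "swst C ([] @ [r, s] @ w) ([] @ [s, r] @ w)" unfolding swst_def using Crs by blast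
    then show ?thesis using swst_eqW by fastforce
  qed
  then have "len S C (r # s # w) = len S C (s # r # w)" by (rule len_eqW)
  moreover have "len S C (s # r # w) \<le> Suc (len S C (r # w))" by (rule len_Cons_le)
  moreover have "Suc (len S C (r # w)) = len S C w" using desc_len[OF ra ws r dr] .
  ultimately show ?thesis unfolding desc_def by simp
qed

lemma desc_add:
  assumes us: "set u \<subseteq> S" and r: "r \<in> S" and dr: "desc S C r u"
    and add: "len_additive S C u A v"
  shows "desc S C r (u @ A @ v)"
proof -
  have "len S C (r # u @ A @ v) \<le> len S C (r # u) + len S C (A @ v)"
    using len_app[of S C "r # u" "A @ v"] by simp
  also have "\<dots> \<le> len S C (r # u) + len S C A + len S C v" using len_app[of S C A v] by simp
  also have "\<dots> < len S C u + len S C A + len S C v" using desc_len[OF ra us r dr] by simp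
  finally show ?thesis using add unfolding desc_def len_additive_def by simp
qed

end


definition Concl :: "'a set \<Rightarrow> ('a \<Rightarrow> 'a \<Rightarrow> bool) \<Rightarrow> 'a list \<Rightarrow> 'a list \<Rightarrow> 'a list \<Rightarrow> 'a list \<Rightarrow> bool" where
  "Concl S C x1 x2 y1 y2 \<longleftrightarrow> (\<exists>m u v s s'. m \<ge> 1 \<and> u \<in> words S \<and> v \<in> words S \<and>
           s \<in> S \<and> s' \<in> S \<and> s \<noteq> s' \<and> \<not> C s s' \<and>
           eqW S C x1 (u @ alt m s s' @ v) \<and> eqW S C x2 (u @ alt m s' s @ v) \<and>
           ((eqW S C y1 (u @ alt (m+1) s s' @ v) \<and> eqW S C y2 (u @ alt (m+1) s' s @ v)) \<or>
            (eqW S C y1 (u @ alt (m+1) s' s @ v) \<and> eqW S C y2 (u @ alt (m+1) s s' @ v))) \<and>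
           len_additive S C u (alt m s s') v \<and> len_additive S C u (alt m s' s) v \<and>
           len_additive S C u (alt (m+1) s s') v \<and> len_additive S C u (alt (m+1) s' s) v)"

lemma butterfly_swapx: "butterfly S C x1 x2 y1 y2 \<Longrightarrow> butterfly S C x2 x1 y1 y2"
  unfolding butterfly_def using eqW_sym by blast
lemma butterfly_swapy: "butterfly S C x1 x2 y1 y2 \<Longrightarrow> butterfly S C x1 x2 y2 y1"
  unfolding butterfly_def using eqW_sym by blast

lemma ss1: "s \<in> S \<Longrightarrow> eqW S C a (s # b) \<Longrightarrow> eqW S C (s # a) b"
proof -
  assume s: "s \<in> S" and e: "eqW S C a (s # b)"
  have "eqW S C (s # a) (s # s # b)" using eqW_Cons[OF e] .
  then show ?thesis using eqW_trans[OF _ eqW_cancel[OF s]] by blast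
qed

lemma ss2: "s \<in> S \<Longrightarrow> eqW S C (s # a) b \<Longrightarrow> eqW S C a (s # b)"
proof -
  assume s: "s \<in> S" and e: "eqW S C (s # a) b"
  have "eqW S C (s # s # a) (s # b)" using eqW_Cons[OF e] .
  then show ?thesis using eqW_trans[OF eqW_sym[OF eqW_cancel[OF s]]] by blast
qed

context
  fixes S :: "'a set" and C :: "'a \<Rightarrow> 'a \<Rightarrow> bool"
  assumes ra: "right_angled S C"
begin

lemma Concl_swapx: "Concl S C x1 x2 y1 y2 \<Longrightarrow> Concl S C x2 x1 y1 y2"
proof -
  assume "Concl S C x1 x2 y1 y2"
  then obtain m u v s s' where H: "m \<ge> 1" "u \<in> words S" "v \<in> words S"
           "s \<in> S" "s' \<in> S" "s \<noteq> s'" "\<not> C s s'"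
           "eqW S C x1 (u @ alt m s s' @ v)" "eqW S C x2 (u @ alt m s' s @ v)"
           "((eqW S C y1 (u @ alt (m+1) s s' @ v) \<and> eqW S C y2 (u @ alt (m+1) s' s @ v)) \<or>
            (eqW S C y1 (u @ alt (m+1) s' s @ v) \<and> eqW S C y2 (u @ alt (m+1) s s' @ v)))"
           "len_additive S C u (alt m s s') v" "len_additive S C u (alt m s' s) v"
           "len_additive S C u (alt (m+1) s s') v" "len_additive S C u (alt (m+1) s' s) v"
    unfolding Concl_def by blast
  have "\<not> C s' s" using H(7) Csym[OF ra] by blast
  then show ?thesis unfolding Concl_def
    apply (rule_tac x=m in exI, rule_tac x=u in exI, rule_tac x=v in exI, rule_tac x=s' in exI, rule_tac x=s in exI)
    using H by auto
qed

lemma peel_add: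
  assumes ws: "set w \<subseteq> S" and r: "r \<in> S" and us: "set u \<subseteq> S" and dr: "desc S C r w"
    and e: "eqW S C (r # w) (u @ A @ v)" and add: "len_additive S C u A v"
  shows "len_additive S C (r # u) A v" "eqW S C w (r # u @ A @ v)"
proof -
  show e2: "eqW S C w (r # u @ A @ v)" using ss2[OF r e] .
  have l1: "len S C (r # u @ A @ v) = Suc (len S C u + len S C A + len S C v)"
    using len_eqW[OF e2] desc_len[OF ra ws r dr] len_eqW[OF e] add unfolding len_additive_def by simp
  have l2: "len S C (r # u) \<le> Suc (len S C u)" by (rule len_Cons_le)
  have "len S C ((r # u) @ A @ v) \<le> len S C (r # u) + len S C (A @ v)" by (rule len_app)
  also have "\<dots> \<le> len S C (r # u) + len S C A + len S C v" using len_app[of S C A v] by simp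
  finally have l3: "len S C (r # u @ A @ v) \<le> len S C (r # u) + len S C A + len S C v" by simp
  show "len_additive S C (r # u) A v" unfolding len_additive_def using l1 l2 l3 by simp
qed

lemma Concl_peel:
  assumes r: "r \<in> S" and s1: "set x1 \<subseteq> S" "set x2 \<subseteq> S" "set y1 \<subseteq> S" "set y2 \<subseteq> S"
    and d: "desc S C r x1" "desc S C r x2" "desc S C r y1" "desc S C r y2"
    and c: "Concl S C (r # x1) (r # x2) (r # y1) (r # y2)"
  shows "Concl S C x1 x2 y1 y2"
proof -
  obtain m u v s s' where H: "m \<ge> 1" "u \<in> words S" "v \<in> words S"
           "s \<in> S" "s' \<in> S" "s \<noteq> s'" "\<not> C s s'"
           "eqW S C (r # x1) (u @ alt m s s' @ v)" "eqW S C (r # x2) (u @ alt m s' s @ v)"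
           "((eqW S C (r # y1) (u @ alt (m+1) s s' @ v) \<and> eqW S C (r # y2) (u @ alt (m+1) s' s @ v)) \<or>
            (eqW S C (r # y1) (u @ alt (m+1) s' s @ v) \<and> eqW S C (r # y2) (u @ alt (m+1) s s' @ v)))"
           "len_additive S C u (alt m s s') v" "len_additive S C u (alt m s' s) v"
           "len_additive S C u (alt (m+1) s s') v" "len_additive S C u (alt (m+1) s' s) v"
    using c unfolding Concl_def by blast
  have us: "set u \<subseteq> S" using H(2) unfolding words_def by simp
  have ru: "r # u \<in> words S" using us r unfolding words_def by simp
  note P1 = peel_add[OF s1(1) r us d(1) H(8) H(11)]
  note P2 = peel_add[OF s1(2) r us d(2) H(9) H(12)]
  show ?thesis
  proof (cases "eqW S C (r # y1) (u @ alt (m+1) s s' @ v) \<and> eqW S C (r # y2) (u @ alt (m+1) s' s @ v)")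
    case True
    note P3 = peel_add[OF s1(3) r us d(3) conjunct1[OF True] H(13)]
    note P4 = peel_add[OF s1(4) r us d(4) conjunct2[OF True] H(14)]
    show ?thesis unfolding Concl_def
      apply (rule_tac x=m in exI, rule_tac x="r # u" in exI, rule_tac x=v in exI, rule_tac x=s in exI, rule_tac x=s' in exI)
      using H(1,3-7) ru P1 P2 P3 P4 by simp
  next
    case False
    then have F: "eqW S C (r # y1) (u @ alt (m+1) s' s @ v)" "eqW S C (r # y2) (u @ alt (m+1) s s' @ v)"
      using H(10) by blast+
    note P3 = peel_add[OF s1(3) r us d(3) F(1) H(14)]
    note P4 = peel_add[OF s1(4) r us d(4) F(2) H(13)]
    show ?thesis unfolding Concl_def
      apply (rule_tac x=m in exI, rule_tac x="r # u" in exI, rule_tac x=v in exI, rule_tac x=s in exI, rule_tac x=s' in exI)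
      using H(1,3-7) ru P1 P2 P3 P4 by simp
  qed
qed

lemma case1:
  assumes IH: "\<And>x1 x2 y1 y2. set x1 \<subseteq> S \<Longrightarrow> set x2 \<subseteq> S \<Longrightarrow> set y1 \<subseteq> S \<Longrightarrow> set y2 \<subseteq> S \<Longrightarrow>
       butterfly S C x1 x2 y1 y2 \<Longrightarrow> len S C y1 < n \<Longrightarrow> Concl S C x1 x2 y1 y2"
    and s1: "set x1 \<subseteq> S" "set x2 \<subseteq> S" "set y1 \<subseteq> S" "set y2 \<subseteq> S"
    and b: "butterfly S C x1 x2 y1 y2" and n: "len S C y1 = n"
    and r: "r \<in> S" and d1: "desc S C r y1" and d2: "desc S C r y2"
  shows "Concl S C x1 x2 y1 y2"
proof -
  have nx: "\<not> eqW S C x1 x2" and ny: "\<not> eqW S C y1 y2"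
    and c11: "bruhat_cover S C x1 y1" and c12: "bruhat_cover S C x1 y2"
    and c21: "bruhat_cover S C x2 y1" and c22: "bruhat_cover S C x2 y2"
    using b unfolding butterfly_def by blast+
  have rs: "set [r] \<subseteq> S" using r by simp
  have dx: "desc S C r x" if xs: "set x \<subseteq> S" and ca: "bruhat_cover S C x y1" and cb: "bruhat_cover S C x y2" for x
  proof (rule ccontr)
    assume nd: "\<not> desc S C r x"
    have "eqW S C x (r # y1)" using nondesc_cover[OF ra xs s1(3) r ca nd d1] .
    moreover have "eqW S C x (r # y2)" using nondesc_cover[OF ra xs s1(4) r cb nd d2] .
    ultimately have "eqW S C ([r] @ y1) ([r] @ y2)" using eqW_sym eqW_trans by (metis append_Cons append_Nil)
    then have "eqW S C y1 y2" using cancel_left[OF ra rs] by blast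
    then show False using ny by blast
  qed
  have dx1: "desc S C r x1" using dx[OF s1(1) c11 c12] .
  have dx2: "desc S C r x2" using dx[OF s1(2) c21 c22] .
  have ne: "\<not> eqW S C (r # a) (r # b)" if "\<not> eqW S C a b" for a b
    using that cancel_left[OF ra rs, of a b] by auto
  have "butterfly S C (r # x1) (r # x2) (r # y1) (r # y2)"
    unfolding butterfly_def
    using ne[OF nx] ne[OF ny] peel[OF ra s1(1) s1(3) r c11 dx1 d1] peel[OF ra s1(1) s1(4) r c12 dx1 d2]
      peel[OF ra s1(2) s1(3) r c21 dx2 d1] peel[OF ra s1(2) s1(4) r c22 dx2 d2] by blast
  moreover have "len S C (r # y1) < n" using d1 n unfolding desc_def by simp
  moreover have "set (r # x1) \<subseteq> S" "set (r # x2) \<subseteq> S" "set (r # y1) \<subseteq> S" "set (r # y2) \<subseteq> S"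
    using s1 r by auto
  ultimately have "Concl S C (r # x1) (r # x2) (r # y1) (r # y2)" using IH by blast
  then show ?thesis using Concl_peel[OF r s1 dx1 dx2 d1 d2] by blast
qed

end


context
  fixes S :: "'a set" and C :: "'a \<Rightarrow> 'a \<Rightarrow> bool"
  assumes ra: "right_angled S C"
begin

lemma exactly_one:
  assumes s1: "set x1 \<subseteq> S" "set x2 \<subseteq> S" "set y1 \<subseteq> S" "set y2 \<subseteq> S"
    and b: "butterfly S C x1 x2 y1 y2" and s: "s \<in> S"
    and d1: "desc S C s y1" and d2: "\<not> desc S C s y2"
  shows "(desc S C s x1 \<and> \<not> desc S C s x2 \<and> eqW S C x2 (s # y1)) \<or>
         (desc S C s x2 \<and> \<not> desc S C s x1 \<and> eqW S C x1 (s # y1))"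
proof -
  have nx: "\<not> eqW S C x1 x2"
    and c11: "bruhat_cover S C x1 y1" and c12: "bruhat_cover S C x1 y2"
    and c21: "bruhat_cover S C x2 y1" and c22: "bruhat_cover S C x2 y2"
    using b unfolding butterfly_def by blast+
  have "\<not> (desc S C s x1 \<and> desc S C s x2)"
    using blocker[OF ra s1(1,2,4) s c12 c22 _ _ d2] nx by blast
  moreover have "\<not> (\<not> desc S C s x1 \<and> \<not> desc S C s x2)"
  proof
    assume "\<not> desc S C s x1 \<and> \<not> desc S C s x2"
    then have "eqW S C x1 (s # y1)" "eqW S C x2 (s # y1)"
      using nondesc_cover[OF ra s1(1,3) s c11 _ d1] nondesc_cover[OF ra s1(2,3) s c21 _ d1] by blast+
    then show False using nx eqW_sym eqW_trans by blast
  qed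
  moreover have "\<not> desc S C s x2 \<Longrightarrow> eqW S C x2 (s # y1)" using nondesc_cover[OF ra s1(2,3) s c21 _ d1] by blast
  moreover have "\<not> desc S C s x1 \<Longrightarrow> eqW S C x1 (s # y1)" using nondesc_cover[OF ra s1(1,3) s c11 _ d1] by blast
  ultimately show ?thesis by blast
qed

lemma refute_case:
  assumes x1s: "set x1 \<subseteq> S" and x2s: "set x2 \<subseteq> S" and y1s: "set y1 \<subseteq> S" and y2s: "set y2 \<subseteq> S"
    and s: "s \<in> S" and t: "t \<in> S" and st: "s \<noteq> t"
    and ds1: "desc S C s x1" and dt1: "desc S C t x1" and ds2: "\<not> desc S C s x2" and dt2: "\<not> desc S C t x2"
    and c1: "bruhat_cover S C x1 y1" and c2: "bruhat_cover S C x1 y2"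
    and e1: "eqW S C x2 (s # y1)" and e2: "eqW S C x2 (t # y2)"
    and dy1: "desc S C s y1" and dy2: "desc S C t y2"
  shows False
proof -
  obtain Z where Cst: "C s t" and Z: "rd C (s # t # Z)" "set Z \<subseteq> S" "eqW S C x1 (s # t # Z)"
    using desc_comm[OF ra x1s s t ds1 dt1 st] by blast
  have Cts: "C t s" using Csym[OF ra Cst] .
  have x1len: "len S C x1 = Suc (Suc (length Z))" using rdlen[OF ra Z(1)] len_eqW[OF Z(3)] by simp
  have Zlen: "len S C Z = length Z" using rdlen[OF ra] Z(1) by simp
  have ca: "bruhat_cover S C (s # x1) (s # y1)" using peel[OF ra x1s y1s s c1 ds1 dy1] .
  have ea: "eqW S C (s # x1) (t # Z)" using ss1[OF s Z(3)] .
  have ea2: "eqW S C (s # y1) x2" using eqW_sym[OF e1] .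
  have cA: "bruhat_cover S C (t # Z) x2" using cover_cong[OF ea ea2 ca] .
  have cb: "bruhat_cover S C (t # x1) (t # y2)" using peel[OF ra x1s y2s t c2 dt1 dy2] .
  have "eqW S C (t # x1) (t # s # t # Z)" using eqW_Cons[OF Z(3)] .
  also have "eqW S C (t # s # t # Z) (s # t # t # Z)"
  proof -
    have "swst C ([] @ [t, s] @ (t # Z)) ([] @ [s, t] @ (t # Z))" unfolding swst_def using Cts by blast
    then show ?thesis using swst_eqW by fastforce
  qed
  also have "eqW S C (s # t # t # Z) (s # Z)" using eqW_Cons[OF eqW_cancel[OF t]] .
  finally have eb: "eqW S C (t # x1) (s # Z)" .
  have cB: "bruhat_cover S C (s # Z) x2" using cover_cong[OF eb eqW_sym[OF e2] cb] .
  have la: "len S C (t # Z) = Suc (length Z)" using len_eqW[OF ea] desc_len[OF ra x1s s ds1] x1len by simp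
  have lb: "len S C (s # Z) = Suc (length Z)" using len_eqW[OF eb] desc_len[OF ra x1s t dt1] x1len by simp
  have tZs: "set (t # Z) \<subseteq> S" and sZs: "set (s # Z) \<subseteq> S" using Z(2) s t by auto
  have dtZ: "desc S C t (t # Z)"
    unfolding desc_def using la len_eqW[OF eqW_cancel[OF t, of C Z]] Zlen by simp
  have dsZ: "desc S C s (s # Z)"
    unfolding desc_def using lb len_eqW[OF eqW_cancel[OF s, of C Z]] Zlen by simp
  have rtZ: "rd C (t # Z)" using len_rd[OF ra tZs] la by simp
  have rsZ: "rd C (s # Z)" using len_rd[OF ra sZs] lb by simp
  let ?X = "Phi C x2"
  have P: "rd C ?X" "set ?X \<subseteq> S" "eqW S C ?X x2" using Phi_props[OF ra x2s] by auto
  obtain k1 where k1: "k1 < length ?X" "rd C (rm k1 ?X)" "eqW S C (rm k1 ?X) (t # Z)"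
      "dl C t (rm k1 ?X) \<noteq> None" "dl C t ?X = None"
    using blocker_word[OF ra tZs x2s t cA dtZ dt2 P] by blast
  obtain k2 where k2: "k2 < length ?X" "rd C (rm k2 ?X)" "eqW S C (rm k2 ?X) (s # Z)"
      "dl C s (rm k2 ?X) \<noteq> None" "dl C s ?X = None"
    using blocker_word[OF ra sZs x2s s cB dsZ ds2 P] by blast
  have a: "\<not> C (?X ! k1) t" using blocker_pos[OF k1(5) k1(1) k1(4) k1(1) k1(4)] by blast
  have m1: "mset (rm k1 ?X) = mset (t # Z)" using sw_mset[OF rd_sw[OF ra k1(2) rtZ k1(3)]] .
  have m2: "mset (rm k2 ?X) = mset (s # Z)" using sw_mset[OF rd_sw[OF ra k2(2) rsZ k2(3)]] .
  have "add_mset (?X ! k1) (mset (t # Z)) = add_mset (?X ! k2) (mset (s # Z))"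
    using mset_rm[OF k1(1)] mset_rm[OF k2(1)] m1 m2 by simp
  then have E: "add_mset (?X ! k1) (add_mset t (mset Z)) = add_mset (?X ! k2) (add_mset s (mset Z))"
    by simp
  have "count (add_mset (?X ! k1) (add_mset t (mset Z))) s = count (add_mset (?X ! k2) (add_mset s (mset Z))) s"
    using E by (rule arg_cong)
  then have "?X ! k1 = s" using st by (simp only: count_add_mset split: if_splits) auto
  then show False using a Cst by simp
qed

end


context
  fixes S :: "'a set" and C :: "'a \<Rightarrow> 'a \<Rightarrow> bool"
  assumes ra: "right_angled S C"
begin

lemma u_trivial:
  assumes x1s: "set x1 \<subseteq> S" and x2s: "set x2 \<subseteq> S" and s: "s \<in> S" and t: "t \<in> S"
    and ds1: "desc S C s x1" and dt2: "desc S C t x2" and nds2: "\<not> desc S C s x2" and ndt1: "\<not> desc S C t x1"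
    and ey1: "eqW S C y1 (s # x2)" and ey2: "eqW S C y2 (t # x1)"
    and noc: "\<forall>r\<in>S. \<not> (desc S C r y1 \<and> desc S C r y2)"
    and us: "set u \<subseteq> S"
    and h1: "eqW S C x1 (u @ A1 @ v)" and a1: "len_additive S C u A1 v"
    and h2: "eqW S C x2 (u @ A2 @ v)" and a2: "len_additive S C u A2 v"
  shows "len S C u = 0"
proof (rule ccontr)
  assume "len S C u \<noteq> 0"
  then obtain r where r: "r \<in> S" "desc S C r u" using len_pos_desc[OF ra us] by blast
  have dr1: "desc S C r x1" using desc_add[OF ra us r a1] desc_eqW[OF ra h1] by blast
  have dr2: "desc S C r x2" using desc_add[OF ra us r a2] desc_eqW[OF ra h2] by blast
  have rs: "r \<noteq> s" using dr2 nds2 by blast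
  have rt: "r \<noteq> t" using dr1 ndt1 by blast
  have Crs: "C r s" using desc_comm[OF ra x1s r(1) s dr1 ds1 rs] by blast
  have Crt: "C r t" using desc_comm[OF ra x2s r(1) t dr2 dt2 rt] by blast
  have "desc S C r (s # x2)" using desc_D4[OF ra x2s s r(1) dr2 Crs nds2] .
  then have "desc S C r y1" using desc_eqW[OF ra ey1] by blast
  moreover have "desc S C r (t # x1)" using desc_D4[OF ra x1s t r(1) dr1 Crt ndt1] .
  then have "desc S C r y2" using desc_eqW[OF ra ey2] by blast
  ultimately show False using noc r(1) by blast
qed

lemma rd_altV:
  assumes p: "p \<in> S" and q: "q \<in> S" and pq: "p \<noteq> q" "\<not> C p q" and vs: "set v \<subseteq> S"
    and l: "len S C (alt k p q @ v) = len S C (alt k p q) + len S C v"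
  shows "rd C (alt k p q @ Phi C v) \<and> set (alt k p q @ Phi C v) \<subseteq> S \<and> eqW S C (alt k p q @ Phi C v) (alt k p q @ v)"
proof -
  have P: "rd C (Phi C v)" "set (Phi C v) \<subseteq> S" "eqW S C (Phi C v) v" "length (Phi C v) = len S C v"
    using Phi_props[OF ra vs] by auto
  have e: "eqW S C (alt k p q @ Phi C v) (alt k p q @ v)" using eqW_app1[OF P(3)] .
  have ss: "set (alt k p q @ Phi C v) \<subseteq> S" using set_alt[of k p q] P(2) p q by auto
  have "len S C (alt k p q @ Phi C v) = length (alt k p q @ Phi C v)"
    using len_eqW[OF e] l len_alt[OF ra pq] P(4) by simp
  then have "rd C (alt k p q @ Phi C v)" using len_rd[OF ra ss] by simp
  then show ?thesis using e ss by blast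
qed

lemma finish:
  assumes x1s: "set x1 \<subseteq> S" and x2s: "set x2 \<subseteq> S" and y1s: "set y1 \<subseteq> S" and y2s: "set y2 \<subseteq> S"
    and X1s: "set X1 \<subseteq> S" and X2s: "set X2 \<subseteq> S"
    and s: "s \<in> S" and t: "t \<in> S" and st: "s \<noteq> t" and nC: "\<not> C s t"
    and eX1: "eqW S C x1 (s # X1)" and eX2: "eqW S C x2 (t # X2)"
    and ey1: "eqW S C y1 (s # x2)" and ey2: "eqW S C y2 (t # x1)"
    and ds1: "desc S C s x1" and dt2: "desc S C t x2" and nds2: "\<not> desc S C s x2" and ndt1: "\<not> desc S C t x1"
    and noc: "\<forall>r\<in>S. \<not> (desc S C r y1 \<and> desc S C r y2)"
    and nX: "\<not> eqW S C X1 X2" and nx: "\<not> eqW S C x1 x2"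
    and ly1: "len S C y1 = Suc (len S C x1)" and ly2: "len S C y2 = Suc (len S C x1)"
    and lx2: "len S C x2 = len S C x1"
    and IHc: "Concl S C X2 X1 x1 x2"
  shows "Concl S C x1 x2 y1 y2"
proof -
  obtain m u v p q where H: "m \<ge> 1" "u \<in> words S" "v \<in> words S"
           "p \<in> S" "q \<in> S" "p \<noteq> q" "\<not> C p q"
           "eqW S C X2 (u @ alt m p q @ v)" "eqW S C X1 (u @ alt m q p @ v)"
           "((eqW S C x1 (u @ alt (m+1) p q @ v) \<and> eqW S C x2 (u @ alt (m+1) q p @ v)) \<or>
            (eqW S C x1 (u @ alt (m+1) q p @ v) \<and> eqW S C x2 (u @ alt (m+1) p q @ v)))"
           "len_additive S C u (alt m p q) v" "len_additive S C u (alt m q p) v"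
           "len_additive S C u (alt (m+1) p q) v" "len_additive S C u (alt (m+1) q p) v"
    using IHc unfolding Concl_def by blast
  have us: "set u \<subseteq> S" and vs: "set v \<subseteq> S" using H(2,3) unfolding words_def by auto
  have nCqp: "\<not> C q p" using H(7) Csym[OF ra] by blast
  have qp: "q \<noteq> p" using H(6) by blast
  have u0: "len S C u = 0"
  proof (cases "eqW S C x1 (u @ alt (m+1) p q @ v) \<and> eqW S C x2 (u @ alt (m+1) q p @ v)")
    case True
    then show ?thesis using u_trivial[OF x1s x2s s t ds1 dt2 nds2 ndt1 ey1 ey2 noc us _ H(13) _ H(14)] by blast
  next
    case False
    then have "eqW S C x1 (u @ alt (m+1) q p @ v)" "eqW S C x2 (u @ alt (m+1) p q @ v)" using H(10) by blast+
    then show ?thesis using u_trivial[OF x1s x2s s t ds1 dt2 nds2 ndt1 ey1 ey2 noc us _ H(14) _ H(13)] by blast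
  qed
  have ue: "eqW S C u []" using len0[OF ra us u0] .
  have red: "eqW S C w (u @ A @ v) \<Longrightarrow> eqW S C w (A @ v)" for w A
    using eqW_trans[OF _ eqW_app2[OF ue, of "A @ v"]] by simp
  have radd: "len_additive S C u A v \<Longrightarrow> len S C (A @ v) = len S C A + len S C v" for A
  proof -
    assume "len_additive S C u A v"
    moreover have "len S C (u @ A @ v) = len S C (A @ v)" using len_eqW[OF eqW_app2[OF ue, of "A @ v"]] by simp
    ultimately show ?thesis using u0 unfolding len_additive_def by simp
  qed
  have X2e: "eqW S C X2 (alt m p q @ v)" using red[OF H(8)] .
  have X1e: "eqW S C X1 (alt m q p @ v)" using red[OF H(9)] .
  have case_a: "eqW S C x1 (alt (m+1) p q @ v) \<and> eqW S C x2 (alt (m+1) q p @ v)"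
  proof (cases "eqW S C x1 (u @ alt (m+1) p q @ v) \<and> eqW S C x2 (u @ alt (m+1) q p @ v)")
    case True
    then show ?thesis using red by blast
  next
    case False
    then have F: "eqW S C x1 (alt (m+1) q p @ v)" "eqW S C x2 (alt (m+1) p q @ v)" using H(10) red by blast+
    have "eqW S C x1 (q # alt m p q @ v)" using F(1) by (simp add: alt_Suc)
    then have x1q: "eqW S C x1 (q # X2)" using eqW_trans[OF _ eqW_Cons[OF eqW_sym[OF X2e], of q]] by blast
    have "eqW S C x2 (p # alt m q p @ v)" using F(2) by (simp add: alt_Suc)
    then have x2p: "eqW S C x2 (p # X1)" using eqW_trans[OF _ eqW_Cons[OF eqW_sym[OF X1e], of p]] by blast
    have qs: "q \<noteq> s"
    proof
      assume "q = s"
      then have "eqW S C ([s] @ X1) ([s] @ X2)" using x1q eX1 eqW_sym eqW_trans by (metis append_Cons append_Nil)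
      then show False using cancel_left[OF ra _ ] s nX by (metis empty_set empty_subsetI insert_subset list.simps(15))
    qed
    have ps: "p \<noteq> s"
    proof
      assume "p = s"
      then have "eqW S C x1 x2" using x2p eX1 eqW_sym eqW_trans by metis
      then show False using nx by blast
    qed
    have m2: "Suc m \<ge> 2" using H(1) by simp
    obtain W where W: "rd C (alt (Suc m) q p @ W)" "set (alt (Suc m) q p @ W) \<subseteq> S"
        "eqW S C (alt (Suc m) q p @ W) (alt (Suc m) q p @ v)" "W = Phi C v"
      using rd_altV[OF H(5) H(4) qp nCqp vs radd[OF H(14)]] by simp
    have W2: "rd C (alt (Suc m) p q @ W)" "set (alt (Suc m) p q @ W) \<subseteq> S"
        "eqW S C (alt (Suc m) p q @ W) (alt (Suc m) p q @ v)"
      using rd_altV[OF H(4) H(5) H(6) H(7) vs radd[OF H(13)]] W(4) by simp_all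
    have F1: "eqW S C x1 (alt (Suc m) q p @ v)" "eqW S C x2 (alt (Suc m) p q @ v)" using F by simp_all
    have e1: "eqW S C (alt (Suc m) q p @ W) x1" using eqW_trans[OF W(3) eqW_sym[OF F1(1)]] .
    have e2: "eqW S C (alt (Suc m) p q @ W) x2" using eqW_trans[OF W2(3) eqW_sym[OF F1(2)]] .
    have "dl C s (alt (Suc m) q p @ W) \<noteq> None" using desc_word[OF ra x1s s W(1) W(2) e1] ds1 by blast
    moreover have "s \<notin> set (alt (Suc m) q p)" using set_alt[of "Suc m" q p] qs ps by auto
    ultimately have D: "(\<forall>a\<in>set (alt (Suc m) q p). C a s) \<and> dl C s W \<noteq> None" by (rule dl_app_notin)
    have "set (alt (Suc m) q p) = {q, p}" using set_alt2[OF m2] .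
    moreover have "set (alt (Suc m) p q) = {p, q}" using set_alt2[OF m2] .
    ultimately have "\<forall>a\<in>set (alt (Suc m) p q). C a s" using D by auto
    then have "dl C s (alt (Suc m) p q @ W) = map_option ((@) (alt (Suc m) p q)) (dl C s W)"
      by (rule dl_comm_prefix'[OF ra])
    then have "dl C s (alt (Suc m) p q @ W) \<noteq> None" using D by simp
    then have "desc S C s x2" using desc_word[OF ra x2s s W2(1) W2(2) e2] by blast
    then show ?thesis using nds2 by blast
  qed
  have "eqW S C x1 (p # alt m q p @ v)" using case_a by (simp add: alt_Suc)
  then have x1p: "eqW S C x1 (p # X1)" using eqW_trans[OF _ eqW_Cons[OF eqW_sym[OF X1e], of p]] by blast
  have "eqW S C x2 (q # alt m p q @ v)" using case_a by (simp add: alt_Suc)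
  then have x2q: "eqW S C x2 (q # X2)" using eqW_trans[OF _ eqW_Cons[OF eqW_sym[OF X2e], of q]] by blast
  have "eqW S C (p # X1) (s # X1)" using x1p eX1 eqW_sym eqW_trans by blast
  then have ps: "p = s" using gen_cancel[OF ra X1s] by blast
  have "eqW S C (q # X2) (t # X2)" using x2q eX2 eqW_sym eqW_trans by blast
  then have qt: "q = t" using gen_cancel[OF ra X2s] by blast
  have E1: "eqW S C x1 ([] @ alt (m+1) s t @ v)" using case_a ps qt by simp
  have E2: "eqW S C x2 ([] @ alt (m+1) t s @ v)" using case_a ps qt by simp
  have E3: "eqW S C y1 ([] @ alt (m+1+1) s t @ v)"
    using eqW_trans[OF ey1 eqW_Cons[OF conjunct2[OF case_a]]] ps qt by (simp add: alt_Suc)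
  have E4: "eqW S C y2 ([] @ alt (m+1+1) t s @ v)"
    using eqW_trans[OF ey2 eqW_Cons[OF conjunct1[OF case_a]]] ps qt by (simp add: alt_Suc)
  have nCts: "\<not> C t s" using nC Csym[OF ra] by blast
  have L1: "len S C (alt (m+1) s t @ v) = len S C (alt (m+1) s t) + len S C v"
    using radd[OF H(13)] ps qt by simp
  have L2: "len S C (alt (m+1) t s @ v) = len S C (alt (m+1) t s) + len S C v"
    using radd[OF H(14)] ps qt by simp
  have lx1: "len S C x1 = Suc m + len S C v" using L1 len_eqW[OF E1] len_alt[OF ra st nC] by simp
  have L3: "len S C (alt (m+1+1) s t @ v) = len S C (alt (m+1+1) s t) + len S C v"
    using len_eqW[OF E3] ly1 lx1 len_alt[OF ra st nC] by simp
  have L4: "len S C (alt (m+1+1) t s @ v) = len S C (alt (m+1+1) t s) + len S C v"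
    using len_eqW[OF E4] ly2 lx1 len_alt[OF ra _ nCts] st by simp
  have len0: "len S C [] = 0" using len_le_length[of S C "[]"] by simp
  show ?thesis unfolding Concl_def
    apply (rule_tac x="m+1" in exI, rule_tac x="[]" in exI, rule_tac x=v in exI, rule_tac x=s in exI, rule_tac x=t in exI)
    using H(3) s t st nC E1 E2 E3 E4 L1 L2 L3 L4 len0
    by (simp add: len_additive_def words_def)
qed

end


lemma alt1: "alt 1 s t = [s]" by (simp add: alt_def)
lemma alt2: "alt 2 s t = [s, t]" by (simp add: alt_def eval_nat_numeral)

context
  fixes S :: "'a set" and C :: "'a \<Rightarrow> 'a \<Rightarrow> bool"
  assumes ra: "right_angled S C"
begin

lemma case3_main:
  assumes IH: "\<And>x1 x2 y1 y2. set x1 \<subseteq> S \<Longrightarrow> set x2 \<subseteq> S \<Longrightarrow> set y1 \<subseteq> S \<Longrightarrow> set y2 \<subseteq> S \<Longrightarrow>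
       butterfly S C x1 x2 y1 y2 \<Longrightarrow> len S C y1 < n \<Longrightarrow> Concl S C x1 x2 y1 y2"
    and x1s: "set x1 \<subseteq> S" and x2s: "set x2 \<subseteq> S" and y1s: "set y1 \<subseteq> S" and y2s: "set y2 \<subseteq> S"
    and b: "butterfly S C x1 x2 y1 y2" and n: "len S C y1 = n"
    and noc: "\<forall>r\<in>S. \<not> (desc S C r y1 \<and> desc S C r y2)"
    and s: "s \<in> S" and dsy1: "desc S C s y1" and ndsy2: "\<not> desc S C s y2"
    and ds1: "desc S C s x1" and nds2: "\<not> desc S C s x2" and ex2: "eqW S C x2 (s # y1)"
  shows "Concl S C x1 x2 y1 y2"
proof -
  have nx: "\<not> eqW S C x1 x2" and ny: "\<not> eqW S C y1 y2"
    and c11: "bruhat_cover S C x1 y1" and c12: "bruhat_cover S C x1 y2"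
    and c21: "bruhat_cover S C x2 y1" and c22: "bruhat_cover S C x2 y2"
    using b unfolding butterfly_def by blast+
  have ly1: "len S C y1 = Suc (len S C x1)" using cover_len[OF ra x1s y1s c11] .
  have ly2: "len S C y2 = Suc (len S C x1)" using cover_len[OF ra x1s y2s c12] .
  have lx2: "len S C x2 = len S C x1" using cover_len[OF ra x2s y1s c21] ly1 by simp
  obtain t where t: "t \<in> S" "desc S C t y2" using len_pos_desc[OF ra y2s] ly2 by auto
  have ndty1: "\<not> desc S C t y1" using noc t by blast
  have st: "s \<noteq> t" using dsy1 ndty1 by blast
  have ey1: "eqW S C y1 (s # x2)" using eqW_sym[OF ss1[OF s ex2]] .
  from exactly_one[OF ra x1s x2s y2s y1s butterfly_swapy[OF b] t(1) t(2) ndty1]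
  have "desc S C t x2 \<and> \<not> desc S C t x1 \<and> eqW S C x1 (t # y2)"
  proof
    assume A: "desc S C t x1 \<and> \<not> desc S C t x2 \<and> eqW S C x2 (t # y2)"
    have False using refute_case[OF ra x1s x2s y1s y2s s t(1) st ds1 _ nds2 _ c11 c12 ex2 _ dsy1 t(2)] A by blast
    then show ?thesis by blast
  qed
  then have dt2: "desc S C t x2" and ndt1: "\<not> desc S C t x1" and ex1: "eqW S C x1 (t # y2)" by blast+
  have ey2: "eqW S C y2 (t # x1)" using eqW_sym[OF ss1[OF t(1) ex1]] .
  have nC: "\<not> C s t"
  proof
    assume "C s t"
    then have "C t s" using Csym[OF ra] by blast
    then have "desc S C t (s # x2)" using desc_D4[OF ra x2s s t(1) dt2 _ nds2] by blast
    then have "desc S C t y1" using desc_eqW[OF ra eqW_sym[OF ey1]] by blast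
    then show False using ndty1 by blast
  qed
  obtain X1 where X1: "rd C (s # X1)" "set X1 \<subseteq> S" "eqW S C x1 (s # X1)"
    using desc_rdword[OF ra x1s s ds1] by blast
  obtain X2 where X2: "rd C (t # X2)" "set X2 \<subseteq> S" "eqW S C x2 (t # X2)"
    using desc_rdword[OF ra x2s t(1) dt2] by blast
  have lX1: "len S C x1 = Suc (len S C X1)"
    using rdlen[OF ra X1(1)] len_eqW[OF X1(3)] rdlen[OF ra, of X1] X1(1) by simp
  have lX2: "len S C x2 = Suc (len S C X2)"
    using rdlen[OF ra X2(1)] len_eqW[OF X2(3)] rdlen[OF ra, of X2] X2(1) by simp
  show ?thesis
  proof (cases "eqW S C X1 X2")
    case True
    have E1: "eqW S C x1 ([] @ alt 1 s t @ X1)" using X1(3) by (simp add: alt1 alt_Suc)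
    have "eqW S C (t # X2) (t # X1)" using eqW_Cons[OF eqW_sym[OF True]] .
    then have E2': "eqW S C x2 (t # X1)" using eqW_trans[OF X2(3)] by blast
    then have E2: "eqW S C x2 ([] @ alt 1 t s @ X1)" by (simp add: alt1 alt_Suc)
    have E3': "eqW S C y1 (s # t # X1)" using eqW_trans[OF ey1 eqW_Cons[OF E2']] .
    have E3: "eqW S C y1 ([] @ alt (1+1) s t @ X1)" using E3' by (simp add: alt2 alt_Suc)
    have E4': "eqW S C y2 (t # s # X1)" using eqW_trans[OF ey2 eqW_Cons[OF X1(3)]] .
    have E4: "eqW S C y2 ([] @ alt (1+1) t s @ X1)" using E4' by (simp add: alt2 alt_Suc)
    have l0: "len S C [] = 0" using len_le_length[of S C "[]"] by simp
    have la1: "len S C (alt 1 s t) = 1" "len S C (alt 1 t s) = 1"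
      "len S C (alt (1+1) s t) = 2" "len S C (alt (1+1) t s) = 2"
    proof -
      have ts: "t \<noteq> s" and nCts: "\<not> C t s" using st nC Csym[OF ra, of t s] by auto
      show "len S C (alt 1 s t) = 1" using len_alt[OF ra st nC, of 1] .
      show "len S C (alt 1 t s) = 1" using len_alt[OF ra ts nCts, of 1] .
      show "len S C (alt (1+1) s t) = 2" using len_alt[OF ra st nC, of "1+1"] by simp
      show "len S C (alt (1+1) t s) = 2" using len_alt[OF ra ts nCts, of "1+1"] by simp
    qed
    have L1: "len S C ([] @ alt 1 s t @ X1) = Suc (len S C X1)" using len_eqW[OF E1] lX1 by simp
    have L2: "len S C ([] @ alt 1 t s @ X1) = Suc (len S C X1)" using len_eqW[OF E2] lX2 lx2 lX1 by simp
    have L3: "len S C ([] @ alt (1+1) s t @ X1) = Suc (Suc (len S C X1))" using len_eqW[OF E3] ly1 lX1 by simp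
    have L4: "len S C ([] @ alt (1+1) t s @ X1) = Suc (Suc (len S C X1))" using len_eqW[OF E4] ly2 lX1 by simp
    show ?thesis unfolding Concl_def
      apply (rule_tac x=1 in exI, rule_tac x="[]" in exI, rule_tac x=X1 in exI, rule_tac x=s in exI, rule_tac x=t in exI)
      apply (intro conjI)
      using X1(2) s t(1) st nC E1 E2 E3 E4 L1 L2 L3 L4 l0 la1
      by (simp_all add: len_additive_def words_def)
  next
    case False
    have sub1: "subseq X1 (s # X1)" by (rule list_emb_Cons) simp
    have sub2: "subseq X2 (t # X2)" by (rule list_emb_Cons) simp
    have sX1: "set (s # X1) \<subseteq> S" using X1(2) s by simp
    have sX2: "set (t # X2) \<subseteq> S" using X2(2) t by simp
    have cX1x1: "bruhat_cover S C X1 x1"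
      using cover_of_len[OF le_fixedI[OF ra X1(1) sX1 eqW_sym[OF X1(3)] sub1 eqW_refl] lX1] .
    have cX2x2: "bruhat_cover S C X2 x2"
      using cover_of_len[OF le_fixedI[OF ra X2(1) sX2 eqW_sym[OF X2(3)] sub2 eqW_refl] lX2] .
    have cX1x2: "bruhat_cover S C X1 x2"
      using cover_cong[OF ss1[OF s X1(3)] eqW_sym[OF ex2] peel[OF ra x1s y1s s c11 ds1 dsy1]] .
    have cX2x1: "bruhat_cover S C X2 x1"
      using cover_cong[OF ss1[OF t(1) X2(3)] eqW_sym[OF ex1] peel[OF ra x2s y2s t(1) c22 dt2 t(2)]] .
    have "butterfly S C X2 X1 x1 x2"
      unfolding butterfly_def using False eqW_sym nx cX1x1 cX2x2 cX1x2 cX2x1 by blast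
    moreover have "len S C x1 < n" using ly1 n by simp
    ultimately have IHc: "Concl S C X2 X1 x1 x2" using IH[OF X2(2) X1(2) x1s x2s] by blast
    show ?thesis
      using finish[OF ra x1s x2s y1s y2s X1(2) X2(2) s t(1) st nC X1(3) X2(3) ey1 ey2 ds1 dt2 nds2 ndt1
        noc False nx ly1 ly2 lx2 IHc] .
  qed
qed

lemma case3:
  assumes IH: "\<And>x1 x2 y1 y2. set x1 \<subseteq> S \<Longrightarrow> set x2 \<subseteq> S \<Longrightarrow> set y1 \<subseteq> S \<Longrightarrow> set y2 \<subseteq> S \<Longrightarrow>
       butterfly S C x1 x2 y1 y2 \<Longrightarrow> len S C y1 < n \<Longrightarrow> Concl S C x1 x2 y1 y2"
    and x1s: "set x1 \<subseteq> S" and x2s: "set x2 \<subseteq> S" and y1s: "set y1 \<subseteq> S" and y2s: "set y2 \<subseteq> S"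
    and b: "butterfly S C x1 x2 y1 y2" and n: "len S C y1 = n"
    and noc: "\<forall>r\<in>S. \<not> (desc S C r y1 \<and> desc S C r y2)"
  shows "Concl S C x1 x2 y1 y2"
proof -
  have c11: "bruhat_cover S C x1 y1" using b unfolding butterfly_def by blast
  have ly1: "len S C y1 = Suc (len S C x1)" using cover_len[OF ra x1s y1s c11] .
  obtain s where s: "s \<in> S" "desc S C s y1" using len_pos_desc[OF ra y1s] ly1 by auto
  have nsy2: "\<not> desc S C s y2" using noc s by blast
  from exactly_one[OF ra x1s x2s y1s y2s b s(1) s(2) nsy2] show ?thesis
  proof
    assume A: "desc S C s x1 \<and> \<not> desc S C s x2 \<and> eqW S C x2 (s # y1)"
    show ?thesis using case3_main[OF IH x1s x2s y1s y2s b n noc s(1) s(2) nsy2] A by blast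
  next
    assume A: "desc S C s x2 \<and> \<not> desc S C s x1 \<and> eqW S C x1 (s # y1)"
    have "Concl S C x2 x1 y1 y2"
      using case3_main[OF IH x2s x1s y1s y2s butterfly_swapx[OF b] n noc s(1) s(2) nsy2] A by blast
    then show ?thesis using Concl_swapx[OF ra] by blast
  qed
qed

lemma main_ind:
  "set x1 \<subseteq> S \<Longrightarrow> set x2 \<subseteq> S \<Longrightarrow> set y1 \<subseteq> S \<Longrightarrow> set y2 \<subseteq> S \<Longrightarrow>
   butterfly S C x1 x2 y1 y2 \<Longrightarrow> len S C y1 = n \<Longrightarrow> Concl S C x1 x2 y1 y2"
proof (induction n arbitrary: x1 x2 y1 y2 rule: less_induct)
  case (less n)
  have IH: "Concl S C a1 a2 b1 b2" if "set a1 \<subseteq> S" "set a2 \<subseteq> S" "set b1 \<subseteq> S" "set b2 \<subseteq> S"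
      "butterfly S C a1 a2 b1 b2" "len S C b1 < n" for a1 a2 b1 b2
    using less.IH[OF that(6) that(1-5) refl] .
  show ?case
  proof (cases "\<exists>r\<in>S. desc S C r y1 \<and> desc S C r y2")
    case True
    then obtain r where "r \<in> S" "desc S C r y1" "desc S C r y2" by blast
    then show ?thesis using case1[OF ra IH less.prems] by blast
  next
    case False
    then show ?thesis using case3[OF IH less.prems] by blast
  qed
qed

end

theorem lemma7p7:
  fixes S :: "'a set" and C :: "'a \<Rightarrow> 'a \<Rightarrow> bool"
    and x1 x2 y1 y2 :: "'a list"
  assumes "right_angled S C"
    and "x1 \<in> words S" "x2 \<in> words S" "y1 \<in> words S" "y2 \<in> words S"
    and "butterfly S C x1 x2 y1 y2"
  shows "\<exists>m u v s s'. m \<ge> 1 \<and> u \<in> words S \<and> v \<in> words S \<and>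
           s \<in> S \<and> s' \<in> S \<and> s \<noteq> s' \<and> \<not> C s s' \<and>
           eqW S C x1 (u @ alt m s s' @ v) \<and> eqW S C x2 (u @ alt m s' s @ v) \<and>
           ((eqW S C y1 (u @ alt (m+1) s s' @ v) \<and> eqW S C y2 (u @ alt (m+1) s' s @ v)) \<or>
            (eqW S C y1 (u @ alt (m+1) s' s @ v) \<and> eqW S C y2 (u @ alt (m+1) s s' @ v))) \<and>
           len_additive S C u (alt m s s') v \<and> len_additive S C u (alt m s' s) v \<and>
           len_additive S C u (alt (m+1) s s') v \<and> len_additive S C u (alt (m+1) s' s) v"
proof -
  have s: "set x1 \<subseteq> S" "set x2 \<subseteq> S" "set y1 \<subseteq> S" "set y2 \<subseteq> S"
    using assms(2-5) unfolding words_def by auto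
  have "Concl S C x1 x2 y1 y2" using main_ind[OF assms(1) s assms(6) refl] .
  then show ?thesis unfolding Concl_def .
qed


end
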